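(* Let $n\ge 2$ and let $X_1,\dots,X_n$ be real-valued (possibly dependent) random variables with order statistics $X_{1:n}\le\cdots\le X_{n:n}$. Suppose one of the following holds: (A) the distribution function of $X_{n:n}$ has infinite upper endpoint, $X_{n:n}\in\mathrm{GMDA}(h)$ for some positive function $h$, and $$\lim_{x\to\infty}\frac{\mathbb{P}(|X_i|>t h(x),X_j>x)}{\mathbb{P}(X_{n:n}>x)}=0\ \text{for all }1\le i\ne j\le n\text{ and all }t>0,\qquad(\ast)$$ $$\lim_{x\to\infty}\frac{\mathbb{P}(X_i>Lh(x),X_j>Lh(x))}{\mathbb{P}(X_{n:n}>x)}=0\ \text{for all }1\le i<j\le n\text{ and some }L>0;\qquad(\ast\ast)$$ (B) $X_{n:n}\in\mathcal{L}$ and there exists $h\in\mathcal{H}_{X_{n:n}}$ such that $(\ast)$ and $(\ast\ast)$ hold; (C) $X_{n:n}\in\mathcal{L}\cap\mathcal{D}$ and there exists a dominatedly varying $h\in\mathcal{H}_{X_{n:n}}$ such that $(\ast)$ holds. Then for any $0<a\le b<\infty$ and $0\le d<\infty$, $$\mathbb{P}\Big(\sum_{i=0}^{n-1}c_iX_{n-i:n}>x\Big)\sim\mathbb{P}(c_0X_{n:n}>x)\sim\sum_{i=1}^n\mathbb{P}(c_0X_i>x),\qquad x\to\infty,$$ uniformly for $(c_0,c_1,\dots,c_{n-1})\in[a,b]\times[0,d]^{n-1}$ (i.e. the suprema over this set of the absolute differences of the ratios of any two of these quantities from $1$ tend to $0$).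
   Context: Real-valued random variables are assumed not to be concentrated on $(-\infty,0]$. For a distribution function $F$, $\overline{F}=1-F$ and $x_F=\sup\{x:F(x)<1\}$. $F\in\mathrm{GMDA}(h)$ (Gumbel max-domain of attraction) means $\lim_{x\to x_F}\overline{F}(x+yh(x))/\overline{F}(x)=e^{-y}$ for all $y\in\mathbb{R}$. $F\in\mathcal{L}$ (long-tailed) means $\overline{F}(x)>0$ for all $x\ge0$ and $\overline{F}(x+y)\sim\overline{F}(x)$ for every $y\in\mathbb{R}$. $F\in\mathcal{D}$ means $\overline{F}$ is dominatedly varying. A positive function $g$ is dominatedly varying if $0<\liminf_{x\to\infty}g(xy)/g(x)\le\limsup_{x\to\infty}g(xy)/g(x)<\infty$ for every $y>0$. For $F\in\mathcal{L}$, $\mathcal{H}_F$ is the set of eventually positive $h$ with (i) $h(x)=o(x)$; (ii) $\overline{F}(x+yh(x))\sim\overline{F}(x)$ for all $y\in\mathbb{R}$; (iii) $\limsup_{x\to\infty}h(x+yh(x))/h(x)<\infty$ for all $y\in\mathbb{R}$. A random variable is said to belong to a class if its distribution function does. $a(x)\sim b(x)$ means $a(x)/b(x)\to1$ as $x\to\infty$. *)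

theory Defs
  imports "HOL-Probability.Probability"
begin

definition ordstat :: "(nat \<Rightarrow> 'a \<Rightarrow> real) \<Rightarrow> nat \<Rightarrow> nat \<Rightarrow> 'a \<Rightarrow> real" where
  "ordstat X n k w = sort (map (\<lambda>i. X i w) [1..<n+1]) ! (k - 1)"

definition upper_endpoint :: "(real \<Rightarrow> real) \<Rightarrow> ereal" where
  "upper_endpoint F = Sup {ereal x | x. F x < 1}"

definition GMDA :: "(real \<Rightarrow> real) \<Rightarrow> (real \<Rightarrow> real) \<Rightarrow> bool" where
  "GMDA F h \<longleftrightarrow>
     (\<forall>y::real. ((\<lambda>x. (1 - F (x + y * h x)) / (1 - F x)) \<longlongrightarrow> exp (- y))
        (if upper_endpoint F = \<infinity> then at_top
         else at_left (real_of_ereal (upper_endpoint F))))"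

definition long_tailed :: "(real \<Rightarrow> real) \<Rightarrow> bool" where
  "long_tailed F \<longleftrightarrow> (\<forall>x\<ge>0. 1 - F x > 0) \<and>
     (\<forall>y::real. ((\<lambda>x. (1 - F (x + y)) / (1 - F x)) \<longlongrightarrow> 1) at_top)"

definition dominatedly_varying :: "(real \<Rightarrow> real) \<Rightarrow> bool" where
  "dominatedly_varying g \<longleftrightarrow> (\<forall>\<^sub>F x in at_top. g x > 0) \<and>
     (\<forall>y>0. 0 < Liminf at_top (\<lambda>x. ereal (g (x * y) / g x)) \<and>
            Limsup at_top (\<lambda>x. ereal (g (x * y) / g x)) < \<infinity>)"

definition class_D :: "(real \<Rightarrow> real) \<Rightarrow> bool" where
  "class_D F \<longleftrightarrow> dominatedly_varying (\<lambda>x. 1 - F x)"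

definition H_class :: "(real \<Rightarrow> real) \<Rightarrow> (real \<Rightarrow> real) set" where
  "H_class F = {h. (\<forall>\<^sub>F x in at_top. h x > 0) \<and>
     ((\<lambda>x. h x / x) \<longlongrightarrow> 0) at_top \<and>
     (\<forall>y::real. ((\<lambda>x. (1 - F (x + y * h x)) / (1 - F x)) \<longlongrightarrow> 1) at_top) \<and>
     (\<forall>y::real. Limsup at_top (\<lambda>x. ereal (h (x + y * h x) / h x)) < \<infinity>)}"

end

theory Submission
  imports Defs
begin

lemma sum_list_map_sort: "sum_list (map f (sort xs)) = sum_list (map (f::_\<Rightarrow>real) xs)"
proof -
  have "mset (map f (sort xs)) = mset (map f xs)" by simp
  then show ?thesis by (metis sum_mset_sum_list)
qed

lemma length_filter_sort: "length (filter P (sort xs)) = length (filter P (xs::real list))"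
proof -
  have "mset (filter P (sort xs)) = mset (filter P xs)" by simp
  then show ?thesis by (metis size_mset)
qed

lemma ordstat_gt:
  assumes "1 \<le> k" "k \<le> n"
  shows "t < ordstat X n k w \<longleftrightarrow> n - k + 1 \<le> card {i\<in>{1..n}. t < X i w}"
proof -
  define L where "L = map (\<lambda>i. X i w) [1..<n+1]"
  define xs where "xs = sort L"
  have len: "length xs = n" by (simp add: xs_def L_def)
  have sxs: "sorted xs" by (simp add: xs_def)
  have c1: "card {i\<in>{1..n}. t < X i w} = length (filter (\<lambda>v. t < v) L)"
  proof -
    have "length (filter (\<lambda>v. t < v) L) = length (filter (\<lambda>i. t < X i w) [1..<n+1])"
      by (simp add: L_def filter_map comp_def)
    also have "\<dots> = card ({i. t < X i w} \<inter> set [1..<n+1])"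
      by (rule distinct_length_filter) simp
    also have "{i. t < X i w} \<inter> set [1..<n+1] = {i\<in>{1..n}. t < X i w}" by auto
    finally show ?thesis by simp
  qed
  have c3: "length (filter (\<lambda>v. t < v) xs) = card {q. q < n \<and> t < xs!q}"
    by (simp add: length_filter_conv_card len)
  have ce: "card {i\<in>{1..n}. t < X i w} = card {q. q < n \<and> t < xs!q}"
    using c1 c3 length_filter_sort xs_def by metis
  have os: "ordstat X n k w = xs ! (k-1)" by (simp add: ordstat_def xs_def L_def)
  show ?thesis
  proof
    assume "t < ordstat X n k w"
    then have tp: "t < xs!(k-1)" by (simp add: os)
    have "{k-1..<n} \<subseteq> {q. q < n \<and> t < xs!q}"
    proof
      fix q assume "q \<in> {k-1..<n}"
      then have "xs!(k-1) \<le> xs!q" using sorted_nth_mono[OF sxs] len by auto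
      with tp \<open>q \<in> {k-1..<n}\<close> show "q \<in> {q. q < n \<and> t < xs!q}" by auto
    qed
    then have "card {k-1..<n} \<le> card {q. q < n \<and> t < xs!q}"
      by (intro card_mono) auto
    then show "n - k + 1 \<le> card {i\<in>{1..n}. t < X i w}" using ce assms by simp
  next
    assume h: "n - k + 1 \<le> card {i\<in>{1..n}. t < X i w}"
    show "t < ordstat X n k w"
    proof (rule ccontr)
      assume "\<not> t < ordstat X n k w"
      then have tp: "xs!(k-1) \<le> t" by (simp add: os)
      have "{q. q < n \<and> t < xs!q} \<subseteq> {k..<n}"
      proof
        fix q assume q: "q \<in> {q. q < n \<and> t < xs!q}"
        have "k \<le> q"
        proof (rule ccontr)
          assume "\<not> k \<le> q"
          then have "xs!q \<le> xs!(k-1)" using sorted_nth_mono[OF sxs] len assms by auto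
          with q tp show False by auto
        qed
        with q show "q \<in> {k..<n}" by auto
      qed
      then have "card {q. q < n \<and> t < xs!q} \<le> card {k..<n}" by (intro card_mono) auto
      with h ce assms show False by simp
    qed
  qed
qed

lemma ordstat_n_gt:
  assumes "1 \<le> n"
  shows "t < ordstat X n n w \<longleftrightarrow> (\<exists>i\<in>{1..n}. t < X i w)"
proof -
  have "t < ordstat X n n w \<longleftrightarrow> 1 \<le> card {i\<in>{1..n}. t < X i w}"
    using ordstat_gt[of n n t X w] assms by simp
  also have "\<dots> \<longleftrightarrow> {i\<in>{1..n}. t < X i w} \<noteq> {}"
    by (simp add: Suc_le_eq card_gt_0_iff)
  finally show ?thesis by blast
qed

lemma ordstat_n_ge: assumes "1 \<le> n" "i \<in> {1..n}" shows "X i w \<le> ordstat X n n w"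
proof (rule ccontr)
  assume "\<not> X i w \<le> ordstat X n n w"
  then have "ordstat X n n w < X i w" by simp
  then have "ordstat X n n w < ordstat X n n w" using ordstat_n_gt[of n "ordstat X n n w" X w] assms by blast
  then show False by simp
qed

lemma ordstat_n_attained: assumes "1 \<le> n" shows "\<exists>j\<in>{1..n}. ordstat X n n w = X j w"
proof -
  define L where "L = map (\<lambda>i. X i w) [1..<n+1]"
  have "ordstat X n n w = sort L ! (n-1)" by (simp add: ordstat_def L_def)
  moreover have "sort L ! (n-1) \<in> set (sort L)" using assms by (intro nth_mem) (simp add: L_def)
  ultimately have "ordstat X n n w \<in> set L" by simp
  then show ?thesis by (auto simp: L_def)
qed

lemma ordstat_sum:
  assumes "1 \<le> n"
  fixes f :: "real \<Rightarrow> real"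
  shows "(\<Sum>k\<in>{1..<n}. f (ordstat X n k w)) = (\<Sum>i\<in>{1..n}. f (X i w)) - f (ordstat X n n w)"
proof -
  define L where "L = map (\<lambda>i. X i w) [1..<n+1]"
  define xs where "xs = sort L"
  have len: "length xs = n" by (simp add: xs_def L_def)
  have "(\<Sum>k\<in>{1..n}. f (ordstat X n k w)) = (\<Sum>k\<in>{1..n}. f (xs!(k-1)))"
    by (simp add: ordstat_def xs_def L_def)
  also have "\<dots> = (\<Sum>p\<in>{0..<n}. f (xs!p))"
  proof -
    have "(\<Sum>p\<in>{0..<n}. f (xs!p)) = (\<Sum>k\<in>Suc ` {0..<n}. f (xs!(k-1)))"
      by (subst sum.reindex) auto
    also have "Suc ` {0..<n} = {1..n}" by auto
    finally show ?thesis by simp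
  qed
  also have "\<dots> = sum_list (map f xs)"
    by (simp add: sum_list_sum_nth len atLeast0LessThan)
  also have "\<dots> = sum_list (map f L)" by (simp add: xs_def sum_list_map_sort)
  also have "\<dots> = (\<Sum>i\<in>{1..n}. f (X i w))"
  proof -
    have "sum_list (map f L) = sum_list (map (\<lambda>i. f (X i w)) [1..<n+1])" by (simp add: L_def comp_def)
    also have "\<dots> = sum (\<lambda>i. f (X i w)) (set [1..<n+1])" by (rule sum_list_distinct_conv_sum_set) simp
    also have "set [1..<n+1] = {1..n}" by auto
    finally show ?thesis .
  qed
  finally have e: "(\<Sum>k\<in>{1..n}. f (ordstat X n k w)) = (\<Sum>i\<in>{1..n}. f (X i w))" .
  have "{1..n} = insert n {1..<n}" using assms by auto
  then have "(\<Sum>k\<in>{1..n}. f (ordstat X n k w)) = f (ordstat X n n w) + (\<Sum>k\<in>{1..<n}. f (ordstat X n k w))"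
    by simp
  with e show ?thesis by simp
qed


lemma ordstat_meas:
  assumes rv: "\<And>i. i \<in> {1..n} \<Longrightarrow> X i \<in> borel_measurable M"
    and k: "1 \<le> k" "k \<le> n"
  shows "(\<lambda>w. ordstat X n k w) \<in> borel_measurable M"
  unfolding borel_measurable_iff_greater
proof
  fix a :: real
  define m where "m = n - k + 1"
  have m1: "1 \<le> m" by (simp add: m_def)
  define \<I> where "\<I> = {I. I \<subseteq> {1..n} \<and> card I = m}"
  have eq: "{w \<in> space M. a < ordstat X n k w} =
     (\<Union>I\<in>\<I>. \<Inter>i\<in>I. {w \<in> space M. a < X i w})"
  proof (intro set_eqI iffI)
    fix w assume w: "w \<in> {w \<in> space M. a < ordstat X n k w}"
    then have "m \<le> card {i\<in>{1..n}. a < X i w}" using ordstat_gt[OF k, of a X w] m_def by simp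
    then obtain I where I: "I \<subseteq> {i\<in>{1..n}. a < X i w}" "card I = m"
      using obtain_subset_with_card_n by metis
    then have "I \<in> \<I>" by (auto simp: \<I>_def)
    moreover have "I \<noteq> {}" using I m1 by auto
    ultimately show "w \<in> (\<Union>I\<in>\<I>. \<Inter>i\<in>I. {w \<in> space M. a < X i w})"
      using I w by auto
  next
    fix w assume w: "w \<in> (\<Union>I\<in>\<I>. \<Inter>i\<in>I. {w \<in> space M. a < X i w})"
    then obtain I where I: "I \<in> \<I>" "\<forall>i\<in>I. w \<in> space M \<and> a < X i w" by auto
    have ne: "I \<noteq> {}" using I m1 by (auto simp: \<I>_def)
    then have ws: "w \<in> space M" using I by auto
    have "I \<subseteq> {i\<in>{1..n}. a < X i w}" using I by (auto simp: \<I>_def)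
    then have "card I \<le> card {i\<in>{1..n}. a < X i w}" by (intro card_mono) auto
    then have "m \<le> card {i\<in>{1..n}. a < X i w}" using I by (simp add: \<I>_def)
    then have "a < ordstat X n k w" using ordstat_gt[OF k, of a X w] m_def by simp
    with ws show "w \<in> {w \<in> space M. a < ordstat X n k w}" by simp
  qed
  have fin: "finite \<I>"
  proof -
    have "\<I> \<subseteq> Pow {1..n}" by (auto simp: \<I>_def)
    then show ?thesis by (rule finite_subset) simp
  qed
  have "(\<Union>I\<in>\<I>. \<Inter>i\<in>I. {w \<in> space M. a < X i w}) \<in> sets M"
  proof (rule sets.finite_UN[OF fin])
    fix I assume I: "I \<in> \<I>"
    then have ne: "I \<noteq> {}" and fI: "finite I" and sub: "I \<subseteq> {1..n}" using m1
      by (auto simp: \<I>_def intro: finite_subset)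
    show "(\<Inter>i\<in>I. {w \<in> space M. a < X i w}) \<in> sets M"
    proof (rule sets.finite_INT[OF fI ne])
      fix i assume "i \<in> I"
      then have "X i \<in> borel_measurable M" using rv sub by auto
      then show "{w \<in> space M. a < X i w} \<in> sets M" by measurable
    qed
  qed
  with eq show "{w \<in> space M. a < ordstat X n k w} \<in> sets M" by simp
qed


lemma reindex_rev:
  fixes f :: "nat \<Rightarrow> real"
  shows "(\<Sum>i\<in>{1..<n}. f (n - i)) = (\<Sum>k\<in>{1..<n}. f k)"
  by (rule sum.reindex_bij_witness[of _ "\<lambda>k. n - k" "\<lambda>i. n - i"]) auto

lemma S_bounds:
  assumes n1: "1 \<le> n" and c: "\<forall>i\<in>{1..<n}. 0 \<le> c i \<and> c i \<le> d"
  shows "(\<Sum>i<n. c i * ordstat X n (n-i) w) \<le> c 0 * ordstat X n n w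
            + d * ((\<Sum>i\<in>{1..n}. max 0 (X i w)) - max 0 (ordstat X n n w))"
    and "c 0 * ordstat X n n w - d * ((\<Sum>i\<in>{1..n}. \<bar>X i w\<bar>) - \<bar>ordstat X n n w\<bar>)
            \<le> (\<Sum>i<n. c i * ordstat X n (n-i) w)"
proof -
  have sp: "(\<Sum>i<n. c i * ordstat X n (n-i) w) = c 0 * ordstat X n n w + (\<Sum>i\<in>{1..<n}. c i * ordstat X n (n-i) w)"
  proof -
    have "{..<n} = insert 0 {1..<n}" using n1 by auto
    then show ?thesis by simp
  qed
  have up: "(\<Sum>i\<in>{1..<n}. c i * ordstat X n (n-i) w) \<le> (\<Sum>i\<in>{1..<n}. d * max 0 (ordstat X n (n-i) w))"
  proof (rule sum_mono)
    fix i assume "i \<in> {1..<n}"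
    then have "0 \<le> c i" "c i \<le> d" using c by auto
    then show "c i * ordstat X n (n-i) w \<le> d * max 0 (ordstat X n (n-i) w)"
    proof -
      have "c i * ordstat X n (n-i) w \<le> c i * max 0 (ordstat X n (n-i) w)"
        using \<open>0 \<le> c i\<close> by (intro mult_left_mono) auto
      also have "\<dots> \<le> d * max 0 (ordstat X n (n-i) w)"
        using \<open>c i \<le> d\<close> by (intro mult_right_mono) auto
      finally show ?thesis .
    qed
  qed
  have lo: "(\<Sum>i\<in>{1..<n}. - (d * \<bar>ordstat X n (n-i) w\<bar>)) \<le> (\<Sum>i\<in>{1..<n}. c i * ordstat X n (n-i) w)"
  proof (rule sum_mono)
    fix i assume "i \<in> {1..<n}"
    then have "0 \<le> c i" "c i \<le> d" using c by auto
    then show "- (d * \<bar>ordstat X n (n-i) w\<bar>) \<le> c i * ordstat X n (n-i) w"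
    proof -
      have "c i * \<bar>ordstat X n (n-i) w\<bar> \<le> d * \<bar>ordstat X n (n-i) w\<bar>"
        using \<open>c i \<le> d\<close> by (intro mult_right_mono) auto
      moreover have "- (c i * \<bar>ordstat X n (n-i) w\<bar>) \<le> c i * ordstat X n (n-i) w"
      proof -
        have "\<bar>c i * ordstat X n (n-i) w\<bar> = c i * \<bar>ordstat X n (n-i) w\<bar>"
          using \<open>0 \<le> c i\<close> by (simp add: abs_mult)
        then show ?thesis by linarith
      qed
      ultimately show ?thesis by linarith
    qed
  qed
  have e1: "(\<Sum>i\<in>{1..<n}. d * max 0 (ordstat X n (n-i) w)) = d * ((\<Sum>i\<in>{1..n}. max 0 (X i w)) - max 0 (ordstat X n n w))"
  proof -
    have "(\<Sum>i\<in>{1..<n}. d * max 0 (ordstat X n (n-i) w)) = d * (\<Sum>i\<in>{1..<n}. max 0 (ordstat X n (n-i) w))"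
      by (simp add: sum_distrib_left)
    also have "(\<Sum>i\<in>{1..<n}. max 0 (ordstat X n (n-i) w)) = (\<Sum>k\<in>{1..<n}. max 0 (ordstat X n k w))"
      using reindex_rev[of "\<lambda>k. max 0 (ordstat X n k w)" n] by simp
    also have "\<dots> = (\<Sum>i\<in>{1..n}. max 0 (X i w)) - max 0 (ordstat X n n w)"
      using ordstat_sum[OF n1, of "\<lambda>v. max 0 v"] by simp
    finally show ?thesis .
  qed
  have e2: "(\<Sum>i\<in>{1..<n}. - (d * \<bar>ordstat X n (n-i) w\<bar>)) = - (d * ((\<Sum>i\<in>{1..n}. \<bar>X i w\<bar>) - \<bar>ordstat X n n w\<bar>))"
  proof -
    have "(\<Sum>i\<in>{1..<n}. - (d * \<bar>ordstat X n (n-i) w\<bar>)) = - (d * (\<Sum>i\<in>{1..<n}. \<bar>ordstat X n (n-i) w\<bar>))"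
      by (simp add: sum_distrib_left sum_negf)
    also have "(\<Sum>i\<in>{1..<n}. \<bar>ordstat X n (n-i) w\<bar>) = (\<Sum>k\<in>{1..<n}. \<bar>ordstat X n k w\<bar>)"
      using reindex_rev[of "\<lambda>k. \<bar>ordstat X n k w\<bar>" n] by simp
    also have "\<dots> = (\<Sum>i\<in>{1..n}. \<bar>X i w\<bar>) - \<bar>ordstat X n n w\<bar>"
      using ordstat_sum[OF n1, of "\<lambda>v. \<bar>v\<bar>"] by simp
    finally show ?thesis .
  qed
  show "(\<Sum>i<n. c i * ordstat X n (n-i) w) \<le> c 0 * ordstat X n n w
            + d * ((\<Sum>i\<in>{1..n}. max 0 (X i w)) - max 0 (ordstat X n n w))"
    using sp up e1 by linarith
  show "c 0 * ordstat X n n w - d * ((\<Sum>i\<in>{1..n}. \<bar>X i w\<bar>) - \<bar>ordstat X n n w\<bar>)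
            \<le> (\<Sum>i<n. c i * ordstat X n (n-i) w)"
    using sp lo e2 by linarith
qed

lemma sum_minus_argmax:
  fixes f :: "real \<Rightarrow> real"
  assumes "j \<in> {1..n}" "ordstat X n n w = X j w"
  shows "(\<Sum>i\<in>{1..n}. f (X i w)) - f (ordstat X n n w) = (\<Sum>i\<in>{1..n}-{j}. f (X i w))"
  using assms by (simp add: sum_diff1)

lemma pigeon:
  fixes f :: "nat \<Rightarrow> real"
  assumes "finite S" "card S \<le> n" "0 < n" "u < sum f S" "0 \<le> u"
  shows "\<exists>i\<in>S. u / n < f i"
proof (rule ccontr)
  assume "\<not> ?thesis"
  then have "\<forall>i\<in>S. f i \<le> u / n" by auto
  then have "sum f S \<le> of_nat (card S) * (u / n)" using sum_bounded_above[of S f "u/n"] by simp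
  moreover have "of_nat (card S) * (u / n) \<le> of_nat n * (u / n)"
    using assms(2,5) by (intro mult_right_mono) auto
  moreover have "of_nat n * (u / n) = u" using assms(3) by simp
  ultimately show False using assms(4) by linarith
qed


lemma meas_conj: "{w\<in>space M. P w} \<in> sets M \<Longrightarrow> {w\<in>space M. Q w} \<in> sets M \<Longrightarrow> {w\<in>space M. P w \<and> Q w} \<in> sets M"
proof -
  assume "{w\<in>space M. P w} \<in> sets M" "{w\<in>space M. Q w} \<in> sets M"
  then have "{w\<in>space M. P w} \<inter> {w\<in>space M. Q w} \<in> sets M" by blast
  moreover have "{w\<in>space M. P w} \<inter> {w\<in>space M. Q w} = {w\<in>space M. P w \<and> Q w}" by blast
  ultimately show ?thesis by simp
qed

lemma meas_less: assumes [measurable]: "f \<in> borel_measurable M" "g \<in> borel_measurable M"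
  shows "{w\<in>space M. f w < (g w::real)} \<in> sets M"
  by measurable

lemma meas_const: "(\<lambda>w. c::real) \<in> borel_measurable M" by simp

lemma meas_abs: assumes [measurable]: "f \<in> borel_measurable M" shows "(\<lambda>w. \<bar>f w\<bar>::real) \<in> borel_measurable M"
  by measurable

locale core = prob_space M for M :: "'a measure" +
  fixes X :: "nat \<Rightarrow> 'a \<Rightarrow> real" and n :: nat and a b d :: real and h :: "real \<Rightarrow> real"
    and Fb :: "real \<Rightarrow> real"
  assumes n2: "2 \<le> n"
    and rv: "\<And>i. i \<in> {1..n} \<Longrightarrow> X i \<in> borel_measurable M"
    and apos: "0 < a" and ab: "a \<le> b" and d0: "0 \<le> d"
    and Fb_def: "Fb = (\<lambda>y. measure M {w\<in>space M. y < ordstat X n n w})"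
    and E0: "\<forall>\<^sub>F y in at_top. 0 < Fb y"
    and E1: "\<forall>\<epsilon>>0. \<exists>\<eta>>0. \<forall>\<^sub>F y in at_top. Fb (y - \<eta> * h y) \<le> (1 + \<epsilon>) * Fb y \<and> (1 - \<epsilon>) * Fb y \<le> Fb (y + \<eta> * h y)"
    and E2: "\<forall>i\<in>{1..n}. \<forall>j\<in>{1..n}. i \<noteq> j \<longrightarrow> (\<forall>t>0.
              ((\<lambda>y. measure M {w \<in> space M. \<bar>X i w\<bar> > t * h y \<and> X j w > y} / Fb y) \<longlongrightarrow> 0) at_top)"
    and E3: "\<forall>\<^sub>F y in at_top. 0 < h y"
    and E4: "\<exists>t>0. \<forall>\<^sub>F y in at_top. t * h y \<le> y"
    and E5: "\<forall>\<kappa>>0. \<exists>g. (\<forall>\<^sub>F y in at_top. 0 \<le> g y) \<and>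
         (\<forall>i\<in>{1..n}. \<forall>j\<in>{1..n}. i \<noteq> j \<longrightarrow>
            ((\<lambda>y. measure M {w \<in> space M. X i w > g y \<and> X j w > g y} / Fb y) \<longlongrightarrow> 0) at_top \<and>
            (\<forall>\<sigma>>0. ((\<lambda>y. measure M {w \<in> space M. \<bar>X i w\<bar> > \<sigma> * h y \<and> X j w > y - \<kappa> * g y} / Fb y) \<longlongrightarrow> 0) at_top))"
begin

lemma n1: "1 \<le> n" using n2 by simp

lemma Xm: "i \<in> {1..n} \<Longrightarrow> {w\<in>space M. t < X i w} \<in> sets M"
  using meas_less[OF meas_const rv] by blast

lemma Xm2: "i \<in> {1..n} \<Longrightarrow> {w\<in>space M. t < \<bar>X i w\<bar>} \<in> sets M"
  using meas_less[OF meas_const meas_abs[OF rv]] by blast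

lemma ordm: assumes "1 \<le> k" "k \<le> n" shows "(\<lambda>w. ordstat X n k w) \<in> borel_measurable M"
proof (rule ordstat_meas)
  show "\<And>i. i \<in> {1..n} \<Longrightarrow> X i \<in> borel_measurable M" by (rule rv)
qed (use assms in auto)

lemma Mm: "(\<lambda>w. ordstat X n n w) \<in> borel_measurable M"
  using ordm[of n] n1 by simp

lemma Mm2: "{w\<in>space M. t < ordstat X n n w} \<in> sets M"
  using meas_less[OF meas_const Mm] by blast

lemma Sm: "(\<lambda>w. \<Sum>i<n. c i * ordstat X n (n-i) w) \<in> borel_measurable M"
proof (rule borel_measurable_sum)
  fix i assume "i \<in> {..<n}"
  then have "1 \<le> n - i" "n - i \<le> n" by auto
  then have "(\<lambda>w. ordstat X n (n-i) w) \<in> borel_measurable M" by (rule ordm)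
  then show "(\<lambda>w. c i * ordstat X n (n-i) w) \<in> borel_measurable M" by simp
qed

lemma Sm2: "{w\<in>space M. t < (\<Sum>i<n. c i * ordstat X n (n-i) w)} \<in> sets M"
  using meas_less[OF meas_const Sm] by blast

lemma ev_ex: "\<forall>\<^sub>F y in at_top. P y \<Longrightarrow> \<exists>Y. \<forall>y\<ge>Y. P (y::real)"
  by (simp add: eventually_at_top_linorder)

lemma sum_tendsto0:
  assumes "finite I" "\<And>i. i \<in> I \<Longrightarrow> ((\<lambda>y. f i y / Fb y) \<longlongrightarrow> 0) at_top"
  shows "((\<lambda>y. (\<Sum>i\<in>I. f i y) / Fb y) \<longlongrightarrow> 0) at_top"
proof -
  have "((\<lambda>y. \<Sum>i\<in>I. f i y / Fb y) \<longlongrightarrow> (\<Sum>i\<in>I. 0)) at_top"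
    by (rule tendsto_sum) (use assms in auto)
  then show ?thesis by (simp add: sum_divide_distrib)
qed

lemma small_eventually:
  assumes "((\<lambda>y. f y / Fb y) \<longlongrightarrow> 0) at_top" "0 < e"
  shows "\<forall>\<^sub>F y in at_top. f y \<le> e * Fb y"
proof -
  have "\<forall>\<^sub>F y in at_top. f y / Fb y < e" using order_tendstoD(2)[OF assms] by simp
  with E0 show ?thesis
  proof eventually_elim
    case (elim y)
    then show ?case by (simp add: divide_less_eq)
  qed
qed

definition G where "G y = (\<Sum>i\<in>{1..n}. measure M {w\<in>space M. y < X i w})"

lemma Fb_le_G: "Fb y \<le> G y"
proof -
  have eq: "{w\<in>space M. y < ordstat X n n w} = (\<Union>i\<in>{1..n}. {w\<in>space M. y < X i w})"
    by (auto simp: ordstat_n_gt[OF n1])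
  have "measure M (\<Union>i\<in>{1..n}. {w\<in>space M. y < X i w}) \<le> (\<Sum>i\<in>{1..n}. measure M {w\<in>space M. y < X i w})"
    by (rule measure_UNION_le) (auto intro: Xm)
  then show ?thesis by (simp add: Fb_def G_def eq)
qed

lemma G_le:
  "G y \<le> Fb y + (\<Sum>i\<in>{1..n}. \<Sum>j\<in>{1..n}-{i}. measure M {w\<in>space M. y < X i w \<and> y < X j w})"
proof -
  define E where "E i = {w\<in>space M. y < X i w \<and> (\<forall>j\<in>{1..n}. j \<noteq> i \<longrightarrow> X j w \<le> y)}" for i
  have Em: "E i \<in> sets M" if "i \<in> {1..n}" for i
  proof -
    have "E i = {w\<in>space M. y < X i w} - (\<Union>j\<in>{1..n}-{i}. {w\<in>space M. y < X j w})"
      by (auto simp: E_def)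
    then show ?thesis using Xm that by auto
  qed
  have Pm: "{w\<in>space M. y < X i w \<and> y < X j w} \<in> sets M" if "i \<in> {1..n}" "j \<in> {1..n}" for i j
    by (rule meas_conj) (use Xm that in auto)
  have each: "measure M {w\<in>space M. y < X i w} \<le> measure M (E i)
      + (\<Sum>j\<in>{1..n}-{i}. measure M {w\<in>space M. y < X i w \<and> y < X j w})" if i: "i \<in> {1..n}" for i
  proof -
    have sub: "{w\<in>space M. y < X i w} \<subseteq> E i \<union> (\<Union>j\<in>{1..n}-{i}. {w\<in>space M. y < X i w \<and> y < X j w})"
      by (auto simp: E_def)
    have um: "(\<Union>j\<in>{1..n}-{i}. {w\<in>space M. y < X i w \<and> y < X j w}) \<in> sets M"
      using Pm i by auto
    have "measure M {w\<in>space M. y < X i w} \<le> measure M (E i \<union> (\<Union>j\<in>{1..n}-{i}. {w\<in>space M. y < X i w \<and> y < X j w}))"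
      by (rule finite_measure_mono[OF sub]) (use Em[OF i] um in auto)
    also have "\<dots> \<le> measure M (E i) + measure M (\<Union>j\<in>{1..n}-{i}. {w\<in>space M. y < X i w \<and> y < X j w})"
      by (rule measure_Un_le) (use Em[OF i] um in auto)
    also have "measure M (\<Union>j\<in>{1..n}-{i}. {w\<in>space M. y < X i w \<and> y < X j w})
        \<le> (\<Sum>j\<in>{1..n}-{i}. measure M {w\<in>space M. y < X i w \<and> y < X j w})"
      by (rule measure_UNION_le) (use Pm i in auto)
    finally show ?thesis by simp
  qed
  have disj: "disjoint_family_on E {1..n}"
    unfolding disjoint_family_on_def E_def by fastforce
  have "(\<Sum>i\<in>{1..n}. measure M (E i)) = measure M (\<Union>i\<in>{1..n}. E i)"
    by (rule finite_measure_finite_Union[symmetric]) (use Em disj in auto)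
  also have "\<dots> \<le> Fb y"
  proof -
    have "(\<Union>i\<in>{1..n}. E i) \<subseteq> {w\<in>space M. y < ordstat X n n w}"
      by (auto simp: E_def ordstat_n_gt[OF n1])
    then show ?thesis unfolding Fb_def by (intro finite_measure_mono) (auto intro: Mm2)
  qed
  finally have "(\<Sum>i\<in>{1..n}. measure M (E i)) \<le> Fb y" .
  moreover have "G y \<le> (\<Sum>i\<in>{1..n}. measure M (E i)) + (\<Sum>i\<in>{1..n}. \<Sum>j\<in>{1..n}-{i}. measure M {w\<in>space M. y < X i w \<and> y < X j w})"
    unfolding G_def sum.distrib[symmetric] by (rule sum_mono) (rule each)
  ultimately show ?thesis by linarith
qed

lemma claimG: "0 < e \<Longrightarrow> \<forall>\<^sub>F y in at_top. G y \<le> (1 + e) * Fb y"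
proof -
  assume e: "0 < e"
  obtain t where t: "0 < t" "\<forall>\<^sub>F y in at_top. t * h y \<le> y" using E4 by blast
  define D where "D y = (\<Sum>i\<in>{1..n}. \<Sum>j\<in>{1..n}-{i}. measure M {w\<in>space M. t * h y < \<bar>X i w\<bar> \<and> y < X j w})" for y
  have "((\<lambda>y. D y / Fb y) \<longlongrightarrow> 0) at_top"
    unfolding D_def
  proof (rule sum_tendsto0, simp, rule sum_tendsto0, simp)
    fix i j assume "i \<in> {1..n}" "j \<in> {1..n} - {i}"
    then show "((\<lambda>y. measure M {w\<in>space M. t * h y < \<bar>X i w\<bar> \<and> y < X j w} / Fb y) \<longlongrightarrow> 0) at_top"
      using E2 t(1) by auto
  qed
  then have "\<forall>\<^sub>F y in at_top. D y \<le> e * Fb y" using e by (rule small_eventually)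
  with t(2) show ?thesis
  proof eventually_elim
    case (elim y)
    have "(\<Sum>i\<in>{1..n}. \<Sum>j\<in>{1..n}-{i}. measure M {w\<in>space M. y < X i w \<and> y < X j w}) \<le> D y"
      unfolding D_def
    proof (intro sum_mono)
      fix i j assume ij: "i \<in> {1..n}" "j \<in> {1..n} - {i}"
      show "measure M {w\<in>space M. y < X i w \<and> y < X j w} \<le> measure M {w\<in>space M. t * h y < \<bar>X i w\<bar> \<and> y < X j w}"
      proof (rule finite_measure_mono)
        show "{w\<in>space M. y < X i w \<and> y < X j w} \<subseteq> {w\<in>space M. t * h y < \<bar>X i w\<bar> \<and> y < X j w}"
          using elim by auto
        show "{w\<in>space M. t * h y < \<bar>X i w\<bar> \<and> y < X j w} \<in> sets M"
          by (rule meas_conj) (use Xm Xm2 ij in auto)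
      qed
    qed
    moreover have "(1 + e) * Fb y = Fb y + e * Fb y" by (simp add: algebra_simps)
    ultimately show ?case using G_le[of y] elim by linarith
  qed
qed

end


context core begin

definition "\<kappa>0 = d / a + 1"

lemma k0pos: "0 < \<kappa>0" using apos d0 by (simp add: \<kappa>0_def add_nonneg_pos)

lemma kappa: assumes "a \<le> c0" shows "d \<le> c0 * \<kappa>0"
proof -
  have "d = a * (d / a)" using apos by simp
  also have "\<dots> \<le> c0 * (d / a)" using assms d0 apos by (intro mult_right_mono) auto
  also have "\<dots> \<le> c0 * \<kappa>0" using assms apos unfolding \<kappa>0_def by (intro mult_left_mono) auto
  finally show ?thesis .
qed

lemma A1m: "i \<in> {1..n} \<Longrightarrow> j \<in> {1..n} \<Longrightarrow> {w\<in>space M. s < X i w \<and> t < X j w} \<in> sets M"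
  by (rule meas_conj) (use Xm in auto)

lemma A2m: "i \<in> {1..n} \<Longrightarrow> j \<in> {1..n} \<Longrightarrow> {w\<in>space M. s < \<bar>X i w\<bar> \<and> t < X j w} \<in> sets M"
  by (rule meas_conj) (use Xm Xm2 in auto)

lemma double_union_le:
  assumes "\<And>i j. i \<in> {1..n} \<Longrightarrow> j \<in> {1..n} \<Longrightarrow> A i j \<in> sets M"
  shows "measure M (\<Union>i\<in>{1..n}. \<Union>j\<in>{1..n}-{i}. A i j) \<le> (\<Sum>i\<in>{1..n}. \<Sum>j\<in>{1..n}-{i}. measure M (A i j))"
proof -
  have "measure M (\<Union>i\<in>{1..n}. \<Union>j\<in>{1..n}-{i}. A i j) \<le> (\<Sum>i\<in>{1..n}. measure M (\<Union>j\<in>{1..n}-{i}. A i j))"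
    by (rule measure_UNION_le) (use assms in auto)
  also have "\<dots> \<le> (\<Sum>i\<in>{1..n}. \<Sum>j\<in>{1..n}-{i}. measure M (A i j))"
    by (rule sum_mono, rule measure_UNION_le) (use assms in auto)
  finally show ?thesis .
qed

lemma double_union_m:
  assumes "\<And>i j. i \<in> {1..n} \<Longrightarrow> j \<in> {1..n} \<Longrightarrow> A i j \<in> sets M"
  shows "(\<Union>i\<in>{1..n}. \<Union>j\<in>{1..n}-{i}. A i j) \<in> sets M"
  using assms by auto

lemma claimU:
  assumes e: "0 < \<epsilon>"
  shows "\<exists>Y. \<forall>y\<ge>Y. \<forall>c. a \<le> c 0 \<longrightarrow> (\<forall>i\<in>{1..<n}. 0 \<le> c i \<and> c i \<le> d) \<longrightarrow>
     measure M {w\<in>space M. c 0 * y < (\<Sum>i<n. c i * ordstat X n (n-i) w)} \<le> (1 + \<epsilon>) * Fb y"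
proof -
  have "\<exists>\<eta>>0. \<forall>\<^sub>F y in at_top. Fb (y - \<eta> * h y) \<le> (1 + \<epsilon>/2) * Fb y \<and> (1 - \<epsilon>/2) * Fb y \<le> Fb (y + \<eta> * h y)"
    using E1[rule_format, of "\<epsilon>/2"] e by simp
  then obtain \<eta> where \<eta>: "0 < \<eta>" and ev1': "\<forall>\<^sub>F y in at_top. Fb (y - \<eta> * h y) \<le> (1 + \<epsilon>/2) * Fb y \<and> (1 - \<epsilon>/2) * Fb y \<le> Fb (y + \<eta> * h y)"
    by blast
  have ev1: "\<forall>\<^sub>F y in at_top. Fb (y - \<eta> * h y) \<le> (1 + \<epsilon>/2) * Fb y"
    using ev1' by (rule eventually_mono) blast
  define \<kappa>' where "\<kappa>' = \<kappa>0 * real n"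
  have kp: "0 < \<kappa>'" using k0pos n1 by (simp add: \<kappa>'_def)
  define \<sigma> where "\<sigma> = \<eta> / (\<kappa>0 * real n)"
  have sp: "0 < \<sigma>" using k0pos n1 \<eta> by (simp add: \<sigma>_def)
  obtain g where g0: "\<forall>\<^sub>F y in at_top. 0 \<le> g y" and glim: "\<forall>i\<in>{1..n}. \<forall>j\<in>{1..n}. i \<noteq> j \<longrightarrow>
            ((\<lambda>y. measure M {w \<in> space M. X i w > g y \<and> X j w > g y} / Fb y) \<longlongrightarrow> 0) at_top \<and>
            (\<forall>\<sigma>>0. ((\<lambda>y. measure M {w \<in> space M. \<bar>X i w\<bar> > \<sigma> * h y \<and> X j w > y - \<kappa>' * g y} / Fb y) \<longlongrightarrow> 0) at_top)"
    using E5 kp by blast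
  define m1 where "m1 i j y = measure M {w \<in> space M. g y < X i w \<and> g y < X j w}" for i j y
  define m2 where "m2 i j y = measure M {w \<in> space M. \<sigma> * h y < \<bar>X i w\<bar> \<and> y - \<kappa>' * g y < X j w}" for i j y
  define Q where "Q y = (\<Sum>i\<in>{1..n}. \<Sum>j\<in>{1..n}-{i}. m1 i j y + m2 i j y)" for y
  have "((\<lambda>y. Q y / Fb y) \<longlongrightarrow> 0) at_top"
    unfolding Q_def
  proof (rule sum_tendsto0, simp, rule sum_tendsto0, simp)
    fix i j assume ij: "i \<in> {1..n}" "j \<in> {1..n} - {i}"
    have l1: "((\<lambda>y. m1 i j y / Fb y) \<longlongrightarrow> 0) at_top" using glim ij unfolding m1_def by auto
    have l2: "((\<lambda>y. m2 i j y / Fb y) \<longlongrightarrow> 0) at_top" using glim ij sp unfolding m2_def by auto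
    have "((\<lambda>y. m1 i j y / Fb y + m2 i j y / Fb y) \<longlongrightarrow> 0 + 0) at_top" by (rule tendsto_add[OF l1 l2])
    then show "((\<lambda>y. (m1 i j y + m2 i j y) / Fb y) \<longlongrightarrow> 0) at_top" by (simp add: add_divide_distrib)
  qed
  then have evQ: "\<forall>\<^sub>F y in at_top. Q y \<le> (\<epsilon>/2) * Fb y" by (rule small_eventually) (use e in simp)
  have "\<forall>\<^sub>F y in at_top. Fb (y - \<eta> * h y) \<le> (1 + \<epsilon>/2) * Fb y \<and> Q y \<le> (\<epsilon>/2) * Fb y \<and> 0 < h y \<and> 0 \<le> g y"
    by (intro eventually_conj ev1 evQ E3 g0)
  then obtain Y where Y: "\<And>y. y \<ge> Y \<Longrightarrow> Fb (y - \<eta> * h y) \<le> (1 + \<epsilon>/2) * Fb y \<and> Q y \<le> (\<epsilon>/2) * Fb y \<and> 0 < h y \<and> 0 \<le> g y"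
    using ev_ex by blast
  show ?thesis
  proof (intro exI allI impI)
    fix y c assume y: "Y \<le> y" and c0: "a \<le> c 0" and ci: "\<forall>i\<in>{1..<n}. 0 \<le> c i \<and> c i \<le> d"
    have Fy: "Fb (y - \<eta> * h y) \<le> (1 + \<epsilon>/2) * Fb y" and Qy: "Q y \<le> (\<epsilon>/2) * Fb y"
      and hy: "0 < h y" and gy: "0 \<le> g y" using Y[OF y] by auto
    have c0p: "0 < c 0" using c0 apos by linarith
    define A1 where "A1 i j = {w \<in> space M. g y < X i w \<and> g y < X j w}" for i j
    define A2 where "A2 i j = {w \<in> space M. \<sigma> * h y < \<bar>X i w\<bar> \<and> y - \<kappa>' * g y < X j w}" for i j
    define U where "U = {w\<in>space M. y - \<eta> * h y < ordstat X n n w} \<union> (\<Union>i\<in>{1..n}. \<Union>j\<in>{1..n}-{i}. A1 i j \<union> A2 i j)"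
    have ABm: "A1 i j \<union> A2 i j \<in> sets M" if "i \<in> {1..n}" "j \<in> {1..n}" for i j
      unfolding A1_def A2_def using A1m[OF that] A2m[OF that] by blast
    have Um: "U \<in> sets M" unfolding U_def using Mm2 ABm by auto
    have sub: "{w\<in>space M. c 0 * y < (\<Sum>i<n. c i * ordstat X n (n-i) w)} \<subseteq> U"
    proof
      fix w assume "w \<in> {w\<in>space M. c 0 * y < (\<Sum>i<n. c i * ordstat X n (n-i) w)}"
      then have w: "w \<in> space M" and Sw: "c 0 * y < (\<Sum>i<n. c i * ordstat X n (n-i) w)" by auto
      from ordstat_n_attained[OF n1, of X w] obtain j where j: "j \<in> {1..n}" "ordstat X n n w = X j w" ..
      define B where "B = (\<Sum>i\<in>{1..n}-{j}. max 0 (X i w))"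
      have B0: "0 \<le> B" unfolding B_def by (rule sum_nonneg) simp
      have cardj: "card ({1..n}-{j}) \<le> n"
      proof -
        have "card ({1..n}-{j}) \<le> card {1..n}" by (rule card_Diff1_le)
        then show ?thesis by simp
      qed
      have SB: "(\<Sum>i<n. c i * ordstat X n (n-i) w) \<le> c 0 * ordstat X n n w + d * B"
        using S_bounds(1)[OF n1 ci, of X w] sum_minus_argmax[OF j, of "\<lambda>v. max 0 v"] unfolding B_def by simp
      have "d * B \<le> (c 0 * \<kappa>0) * B" using kappa[OF c0] B0 by (rule mult_right_mono)
      then have "c 0 * y < c 0 * (ordstat X n n w + \<kappa>0 * B)" using Sw SB by (simp add: algebra_simps)
      then have yl: "y < ordstat X n n w + \<kappa>0 * B" using c0p by simp
      show "w \<in> U"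
      proof (cases "\<kappa>0 * B \<le> \<eta> * h y")
        case True
        then show ?thesis using yl w unfolding U_def by auto
      next
        case False
        show ?thesis
        proof (cases "\<exists>i\<in>{1..n}-{j}. g y < X i w")
          case True
          then obtain i where i: "i \<in> {1..n}-{j}" "g y < X i w" by blast
          have "X i w \<le> X j w" using ordstat_n_ge[OF n1, of i X w] i j by simp
          then have "w \<in> A1 i j" using i w unfolding A1_def by auto
          then show ?thesis using i j unfolding U_def by blast
        next
          case nf: False
          have "B \<le> (\<Sum>i\<in>{1..n}-{j}. g y)" unfolding B_def
          proof (rule sum_mono)
            fix i assume "i \<in> {1..n}-{j}"
            then have "\<not> g y < X i w" using nf by blast
            then show "max 0 (X i w) \<le> g y" using gy by simp
          qed
          also have "\<dots> = real (card ({1..n}-{j})) * g y" by simp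
          also have "\<dots> \<le> real n * g y"
          proof -
            have "card ({1..n}-{j}) \<le> card {1..n}" by (rule card_Diff1_le)
            then show ?thesis using gy by (intro mult_right_mono) auto
          qed
          finally have "\<kappa>0 * B \<le> \<kappa>0 * (real n * g y)" using k0pos
            by (intro mult_left_mono) auto
          then have "\<kappa>0 * B \<le> \<kappa>' * g y" unfolding \<kappa>'_def by (simp add: mult.assoc)
          then have jb: "y - \<kappa>' * g y < X j w" using yl j by linarith
          have u0: "0 \<le> \<eta> * h y / \<kappa>0" using \<eta> hy k0pos by simp
          have "\<eta> * h y / \<kappa>0 < B" using False k0pos by (simp add: pos_divide_less_eq mult.commute)
          then have "\<exists>i\<in>{1..n}-{j}. \<eta> * h y / \<kappa>0 / real n < max 0 (X i w)"
            unfolding B_def by (intro pigeon) (use u0 n1 cardj in auto)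
          then obtain i where i: "i \<in> {1..n}-{j}" "\<eta> * h y / \<kappa>0 / real n < max 0 (X i w)"
            by blast
          have "\<eta> * h y / \<kappa>0 / real n = \<sigma> * h y" unfolding \<sigma>_def by simp
          moreover have "0 \<le> \<sigma> * h y" using sp hy by simp
          ultimately have "\<sigma> * h y < \<bar>X i w\<bar>" using i by linarith
          then have "w \<in> A2 i j" using jb w unfolding A2_def by auto
          then show ?thesis using i j unfolding U_def by blast
        qed
      qed
    qed
    have U0: "measure M {w\<in>space M. c 0 * y < (\<Sum>i<n. c i * ordstat X n (n-i) w)} \<le> measure M U"
      by (rule finite_measure_mono[OF sub Um])
    have U1: "measure M U \<le> Fb (y - \<eta> * h y) + measure M (\<Union>i\<in>{1..n}. \<Union>j\<in>{1..n}-{i}. A1 i j \<union> A2 i j)"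
      unfolding U_def Fb_def by (rule measure_Un_le) (use Mm2 ABm in auto)
    have U2: "measure M (\<Union>i\<in>{1..n}. \<Union>j\<in>{1..n}-{i}. A1 i j \<union> A2 i j) \<le> (\<Sum>i\<in>{1..n}. \<Sum>j\<in>{1..n}-{i}. measure M (A1 i j \<union> A2 i j))"
      by (rule double_union_le) (rule ABm)
    have U3: "(\<Sum>i\<in>{1..n}. \<Sum>j\<in>{1..n}-{i}. measure M (A1 i j \<union> A2 i j)) \<le> Q y" unfolding Q_def
    proof (intro sum_mono)
      fix i j assume ij: "i \<in> {1..n}" "j \<in> {1..n}-{i}"
      show "measure M (A1 i j \<union> A2 i j) \<le> m1 i j y + m2 i j y"
        unfolding m1_def m2_def A1_def[symmetric] A2_def[symmetric]
        by (rule measure_Un_le) (use A1m A2m ij in \<open>auto simp: A1_def A2_def\<close>)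
    qed
    have "(1 + \<epsilon>) * Fb y = (1 + \<epsilon>/2) * Fb y + (\<epsilon>/2) * Fb y" by (simp add: algebra_simps)
    then show "measure M {w\<in>space M. c 0 * y < (\<Sum>i<n. c i * ordstat X n (n-i) w)} \<le> (1 + \<epsilon>) * Fb y"
      using U0 U1 U2 U3 Fy Qy by linarith
  qed
qed

lemma claimLo:
  assumes e: "0 < \<epsilon>"
  shows "\<exists>Y. \<forall>y\<ge>Y. \<forall>c. a \<le> c 0 \<longrightarrow> (\<forall>i\<in>{1..<n}. 0 \<le> c i \<and> c i \<le> d) \<longrightarrow>
     (1 - \<epsilon>) * Fb y \<le> measure M {w\<in>space M. c 0 * y < (\<Sum>i<n. c i * ordstat X n (n-i) w)}"
proof -
  have "\<exists>\<eta>>0. \<forall>\<^sub>F y in at_top. Fb (y - \<eta> * h y) \<le> (1 + \<epsilon>/2) * Fb y \<and> (1 - \<epsilon>/2) * Fb y \<le> Fb (y + \<eta> * h y)"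
    using E1[rule_format, of "\<epsilon>/2"] e by simp
  then obtain \<eta> where \<eta>: "0 < \<eta>" and ev1': "\<forall>\<^sub>F y in at_top. Fb (y - \<eta> * h y) \<le> (1 + \<epsilon>/2) * Fb y \<and> (1 - \<epsilon>/2) * Fb y \<le> Fb (y + \<eta> * h y)"
    by blast
  have ev1: "\<forall>\<^sub>F y in at_top. (1 - \<epsilon>/2) * Fb y \<le> Fb (y + \<eta> * h y)"
    using ev1' by (rule eventually_mono) blast
  define \<sigma> where "\<sigma> = \<eta> / (\<kappa>0 * real n)"
  have sp: "0 < \<sigma>" using k0pos n1 \<eta> by (simp add: \<sigma>_def)
  define m3 where "m3 i j y = measure M {w \<in> space M. \<sigma> * h y < \<bar>X i w\<bar> \<and> y < X j w}" for i j y
  define R where "R y = (\<Sum>i\<in>{1..n}. \<Sum>j\<in>{1..n}-{i}. m3 i j y)" for y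
  have "((\<lambda>y. R y / Fb y) \<longlongrightarrow> 0) at_top"
    unfolding R_def
  proof (rule sum_tendsto0, simp, rule sum_tendsto0, simp)
    fix i j assume ij: "i \<in> {1..n}" "j \<in> {1..n} - {i}"
    show "((\<lambda>y. m3 i j y / Fb y) \<longlongrightarrow> 0) at_top" using E2 ij sp unfolding m3_def by auto
  qed
  then have evR: "\<forall>\<^sub>F y in at_top. R y \<le> (\<epsilon>/2) * Fb y" by (rule small_eventually) (use e in simp)
  have "\<forall>\<^sub>F y in at_top. (1 - \<epsilon>/2) * Fb y \<le> Fb (y + \<eta> * h y) \<and> R y \<le> (\<epsilon>/2) * Fb y \<and> 0 < h y"
    by (intro eventually_conj ev1 evR E3)
  then obtain Y where Y: "\<And>y. y \<ge> Y \<Longrightarrow> (1 - \<epsilon>/2) * Fb y \<le> Fb (y + \<eta> * h y) \<and> R y \<le> (\<epsilon>/2) * Fb y \<and> 0 < h y"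
    using ev_ex by blast
  show ?thesis
  proof (intro exI allI impI)
    fix y c assume y: "Y \<le> y" and c0: "a \<le> c 0" and ci: "\<forall>i\<in>{1..<n}. 0 \<le> c i \<and> c i \<le> d"
    have Fy: "(1 - \<epsilon>/2) * Fb y \<le> Fb (y + \<eta> * h y)" and Ry: "R y \<le> (\<epsilon>/2) * Fb y"
      and hy: "0 < h y" using Y[OF y] by auto
    have c0p: "0 < c 0" using c0 apos by linarith
    define A3 where "A3 i j = {w \<in> space M. \<sigma> * h y < \<bar>X i w\<bar> \<and> y < X j w}" for i j
    define SS where "SS = {w\<in>space M. c 0 * y < (\<Sum>i<n. c i * ordstat X n (n-i) w)}"
    have A3m: "A3 i j \<in> sets M" if "i \<in> {1..n}" "j \<in> {1..n}" for i j
      unfolding A3_def using A2m[OF that] by blast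
    have SSm: "SS \<in> sets M" unfolding SS_def by (rule Sm2)
    have sub: "{w\<in>space M. y + \<eta> * h y < ordstat X n n w} \<subseteq> SS \<union> (\<Union>i\<in>{1..n}. \<Union>j\<in>{1..n}-{i}. A3 i j)"
    proof
      fix w assume "w \<in> {w\<in>space M. y + \<eta> * h y < ordstat X n n w}"
      then have w: "w \<in> space M" and Mw: "y + \<eta> * h y < ordstat X n n w" by auto
      from ordstat_n_attained[OF n1, of X w] obtain j where j: "j \<in> {1..n}" "ordstat X n n w = X j w" ..
      define A where "A = (\<Sum>i\<in>{1..n}-{j}. \<bar>X i w\<bar>)"
      have A0: "0 \<le> A" unfolding A_def by (rule sum_nonneg) simp
      have cardj: "card ({1..n}-{j}) \<le> n"
      proof -
        have "card ({1..n}-{j}) \<le> card {1..n}" by (rule card_Diff1_le)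
        then show ?thesis by simp
      qed
      have SA: "c 0 * ordstat X n n w - d * A \<le> (\<Sum>i<n. c i * ordstat X n (n-i) w)"
        using S_bounds(2)[OF n1 ci, of X w] sum_minus_argmax[OF j, of "\<lambda>v. \<bar>v\<bar>"] unfolding A_def by simp
      have dA: "d * A \<le> (c 0 * \<kappa>0) * A" using kappa[OF c0] A0 by (rule mult_right_mono)
      show "w \<in> SS \<union> (\<Union>i\<in>{1..n}. \<Union>j\<in>{1..n}-{i}. A3 i j)"
      proof (cases "\<kappa>0 * A \<le> \<eta> * h y")
        case True
        have "y < ordstat X n n w - \<kappa>0 * A" using True Mw by linarith
        then have "c 0 * y < c 0 * (ordstat X n n w - \<kappa>0 * A)" using c0p by simp
        also have "\<dots> = c 0 * ordstat X n n w - (c 0 * \<kappa>0) * A" by (simp add: algebra_simps)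
        also have "\<dots> \<le> (\<Sum>i<n. c i * ordstat X n (n-i) w)" using SA dA by linarith
        finally have "w \<in> SS" using w unfolding SS_def by simp
        then show ?thesis by blast
      next
        case False
        have u0: "0 \<le> \<eta> * h y / \<kappa>0" using \<eta> hy k0pos by simp
        have "\<eta> * h y / \<kappa>0 < A" using False k0pos by (simp add: pos_divide_less_eq mult.commute)
        then have "\<exists>i\<in>{1..n}-{j}. \<eta> * h y / \<kappa>0 / real n < \<bar>X i w\<bar>"
          unfolding A_def by (intro pigeon) (use u0 n1 cardj in auto)
        then obtain i where i: "i \<in> {1..n}-{j}" "\<eta> * h y / \<kappa>0 / real n < \<bar>X i w\<bar>"
          by blast
        have "\<eta> * h y / \<kappa>0 / real n = \<sigma> * h y" unfolding \<sigma>_def by simp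
        then have "\<sigma> * h y < \<bar>X i w\<bar>" using i by linarith
        moreover have "y < X j w" using Mw j \<eta> hy
          by (smt (verit) mult_pos_pos)
        ultimately have "w \<in> A3 i j" using w unfolding A3_def by auto
        then show ?thesis using i j by blast
      qed
    qed
    have L1: "Fb (y + \<eta> * h y) \<le> measure M (SS \<union> (\<Union>i\<in>{1..n}. \<Union>j\<in>{1..n}-{i}. A3 i j))"
      unfolding Fb_def by (rule finite_measure_mono[OF sub]) (use SSm A3m in auto)
    have L2: "measure M (SS \<union> (\<Union>i\<in>{1..n}. \<Union>j\<in>{1..n}-{i}. A3 i j)) \<le> measure M SS + measure M (\<Union>i\<in>{1..n}. \<Union>j\<in>{1..n}-{i}. A3 i j)"
      by (rule measure_Un_le) (use SSm A3m in auto)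
    have L3: "measure M (\<Union>i\<in>{1..n}. \<Union>j\<in>{1..n}-{i}. A3 i j) \<le> R y"
      unfolding R_def m3_def A3_def[symmetric] by (rule double_union_le) (rule A3m)
    have "(1 - \<epsilon>) * Fb y = (1 - \<epsilon>/2) * Fb y - (\<epsilon>/2) * Fb y" by (simp add: algebra_simps)
    then show "(1 - \<epsilon>) * Fb y \<le> measure M {w\<in>space M. c 0 * y < (\<Sum>i<n. c i * ordstat X n (n-i) w)}"
      using L1 L2 L3 Fy Ry unfolding SS_def by linarith
  qed
qed

end


lemma ratio_bound:
  fixes P F :: real
  assumes "0 < F" "\<bar>P - F\<bar> \<le> k * F" "k < r"
  shows "\<bar>P / F - 1\<bar> < r"
proof -
  have "P / F - 1 = (P - F) / F" using assms(1) by (simp add: field_simps)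
  then have "\<bar>P / F - 1\<bar> = \<bar>P - F\<bar> / F" using assms(1) by simp
  also have "\<dots> \<le> k * F / F" using assms(1,2) by (intro divide_right_mono) auto
  also have "\<dots> = k" using assms(1) by simp
  finally show ?thesis using assms(3) by linarith
qed

lemma arith3:
  fixes P F G e :: real
  assumes F: "0 < F" and e: "0 < e" and p1: "(1-e)*F \<le> P" and p2: "P \<le> (1+e)*F"
    and g1: "F \<le> G" and g2: "G \<le> (1+e)*F"
  shows "\<bar>P/F - 1\<bar> < 4*e" "\<bar>F/G - 1\<bar> < 4*e" "\<bar>P/G - 1\<bar> < 4*e"
proof -
  have G: "0 < G" using F g1 by linarith
  have a1: "\<bar>P - F\<bar> \<le> e * F" using p1 p2 by (simp add: algebra_simps abs_le_iff)
  have a2: "\<bar>G - F\<bar> \<le> e * F" using g1 g2 by (simp add: algebra_simps abs_le_iff)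
  have eF: "e * F \<le> e * G" using g1 e by simp
  show "\<bar>P/F - 1\<bar> < 4*e" by (rule ratio_bound[OF F a1]) (use e in simp)
  have "\<bar>F - G\<bar> \<le> e * G" using a2 eF by (simp add: abs_minus_commute)
  from ratio_bound[OF G this] show "\<bar>F/G - 1\<bar> < 4*e" using e by simp
  show "\<bar>P/G - 1\<bar> < 4*e"
  proof (rule ratio_bound[OF G])
    show "\<bar>P - G\<bar> \<le> (2*e) * G" using a1 a2 eF by (simp add: abs_le_iff)
  qed (use e in simp)
qed

lemma eventually_uniform:
  fixes a b :: real
  assumes "0 < a" "a \<le> b" "\<exists>Y. \<forall>y\<ge>Y. P y"
  shows "\<forall>\<^sub>F x in at_top. \<forall>c::nat\<Rightarrow>real. a \<le> c 0 \<longrightarrow> c 0 \<le> b \<longrightarrow> P (x / c 0)"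
proof -
  obtain Y where Y: "\<And>y. y \<ge> Y \<Longrightarrow> P y" using assms(3) by blast
  have bp: "0 < b" using assms by linarith
  show ?thesis unfolding eventually_at_top_linorder
  proof (intro exI allI impI)
    fix x c assume x: "b * max Y 0 + 1 \<le> x" and c: "a \<le> c 0" "c 0 \<le> b"
    define m where "m = max Y 0"
    have m: "Y \<le> m" "0 \<le> m" by (auto simp: m_def)
    have xm: "b * m + 1 \<le> x" using x by (simp add: m_def)
    have cp: "0 < c 0" using c assms by linarith
    have "0 \<le> b * m" using bp m by simp
    then have x0: "0 \<le> x" using xm by linarith
    have "x / b \<le> x / c 0" using x0 cp c by (intro divide_left_mono) auto
    moreover have "m \<le> x / b" using xm bp by (simp add: pos_le_divide_eq mult.commute)
    ultimately show "P (x / c 0)" using m by (intro Y) linarith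
  qed
qed

context core begin

lemma all_bounds:
  assumes e: "0 < e"
  shows "\<exists>Y. \<forall>y\<ge>Y. 0 < Fb y \<and> Fb y \<le> G y \<and> G y \<le> (1+e) * Fb y \<and>
     (\<forall>c. a \<le> c 0 \<longrightarrow> (\<forall>i\<in>{1..<n}. 0 \<le> c i \<and> c i \<le> d) \<longrightarrow>
       (1 - e) * Fb y \<le> measure M {w\<in>space M. c 0 * y < (\<Sum>i<n. c i * ordstat X n (n-i) w)} \<and>
       measure M {w\<in>space M. c 0 * y < (\<Sum>i<n. c i * ordstat X n (n-i) w)} \<le> (1 + e) * Fb y)"
proof -
  obtain Y1 where Y1: "\<forall>y\<ge>Y1. \<forall>c. a \<le> c 0 \<longrightarrow> (\<forall>i\<in>{1..<n}. 0 \<le> c i \<and> c i \<le> d) \<longrightarrow>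
     measure M {w\<in>space M. c 0 * y < (\<Sum>i<n. c i * ordstat X n (n-i) w)} \<le> (1 + e) * Fb y"
    using claimU[OF e] by blast
  obtain Y2 where Y2: "\<forall>y\<ge>Y2. \<forall>c. a \<le> c 0 \<longrightarrow> (\<forall>i\<in>{1..<n}. 0 \<le> c i \<and> c i \<le> d) \<longrightarrow>
     (1 - e) * Fb y \<le> measure M {w\<in>space M. c 0 * y < (\<Sum>i<n. c i * ordstat X n (n-i) w)}"
    using claimLo[OF e] by blast
  obtain Y3 where Y3: "\<And>y. y \<ge> Y3 \<Longrightarrow> G y \<le> (1+e) * Fb y" using ev_ex[OF claimG[OF e]] by blast
  obtain Y4 where Y4: "\<And>y. y \<ge> Y4 \<Longrightarrow> 0 < Fb y" using ev_ex[OF E0] by blast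
  show ?thesis
  proof (intro exI allI impI conjI)
    fix y assume y: "max (max Y1 Y2) (max Y3 Y4) \<le> y"
    show "0 < Fb y" using Y4 y by simp
    show "Fb y \<le> G y" by (rule Fb_le_G)
    show "G y \<le> (1+e) * Fb y" using Y3 y by simp
    fix c assume "a \<le> c 0" "\<forall>i\<in>{1..<n}. 0 \<le> c i \<and> c i \<le> d"
    then show "(1 - e) * Fb y \<le> measure M {w\<in>space M. c 0 * y < (\<Sum>i<n. c i * ordstat X n (n-i) w)}"
      and "measure M {w\<in>space M. c 0 * y < (\<Sum>i<n. c i * ordstat X n (n-i) w)} \<le> (1 + e) * Fb y"
      using Y1 Y2 y by auto
  qed
qed

lemma core_result:
  "let C = {c :: nat \<Rightarrow> real. c 0 \<in> {a..b} \<and> (\<forall>i\<in>{1..n-1}. c i \<in> {0..d})};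
         P1 = (\<lambda>c x. measure M {w \<in> space M. (\<Sum>i<n. c i * ordstat X n (n - i) w) > x});
         P2 = (\<lambda>c x. measure M {w \<in> space M. c 0 * ordstat X n n w > x});
         P3 = (\<lambda>c x. \<Sum>i=1..n. measure M {w \<in> space M. c 0 * X i w > x})
     in (\<forall>\<epsilon>>0. \<forall>\<^sub>F x in at_top. \<forall>c\<in>C. \<bar>P1 c x / P2 c x - 1\<bar> < \<epsilon>) \<and>
        (\<forall>\<epsilon>>0. \<forall>\<^sub>F x in at_top. \<forall>c\<in>C. \<bar>P2 c x / P3 c x - 1\<bar> < \<epsilon>) \<and>
        (\<forall>\<epsilon>>0. \<forall>\<^sub>F x in at_top. \<forall>c\<in>C. \<bar>P1 c x / P3 c x - 1\<bar> < \<epsilon>)"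
proof -
  have key: "\<forall>\<^sub>F x in at_top. \<forall>c. c 0 \<in> {a..b} \<and> (\<forall>i\<in>{1..n-1}. c i \<in> {0..d}) \<longrightarrow>
      \<bar>measure M {w \<in> space M. (\<Sum>i<n. c i * ordstat X n (n - i) w) > x} / measure M {w \<in> space M. c 0 * ordstat X n n w > x} - 1\<bar> < \<epsilon> \<and>
      \<bar>measure M {w \<in> space M. c 0 * ordstat X n n w > x} / (\<Sum>i=1..n. measure M {w \<in> space M. c 0 * X i w > x}) - 1\<bar> < \<epsilon> \<and>
      \<bar>measure M {w \<in> space M. (\<Sum>i<n. c i * ordstat X n (n - i) w) > x} / (\<Sum>i=1..n. measure M {w \<in> space M. c 0 * X i w > x}) - 1\<bar> < \<epsilon>"
    if eps: "0 < \<epsilon>" for \<epsilon>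
  proof -
    define e where "e = \<epsilon> / 4"
    have e: "0 < e" using eps by (simp add: e_def)
    have ev: "\<forall>\<^sub>F x in at_top. \<forall>c::nat\<Rightarrow>real. a \<le> c 0 \<longrightarrow> c 0 \<le> b \<longrightarrow>
      (\<lambda>y. 0 < Fb y \<and> Fb y \<le> G y \<and> G y \<le> (1+e) * Fb y \<and>
     (\<forall>c. a \<le> c 0 \<longrightarrow> (\<forall>i\<in>{1..<n}. 0 \<le> c i \<and> c i \<le> d) \<longrightarrow>
       (1 - e) * Fb y \<le> measure M {w\<in>space M. c 0 * y < (\<Sum>i<n. c i * ordstat X n (n-i) w)} \<and>
       measure M {w\<in>space M. c 0 * y < (\<Sum>i<n. c i * ordstat X n (n-i) w)} \<le> (1 + e) * Fb y)) (x / c 0)"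
      by (rule eventually_uniform[OF apos ab]) (use all_bounds[OF e] in simp)
    then show ?thesis
    proof (rule eventually_mono, intro allI impI)
      fix x and c :: "nat \<Rightarrow> real"
      assume H: "\<forall>c::nat\<Rightarrow>real. a \<le> c 0 \<longrightarrow> c 0 \<le> b \<longrightarrow>
      (\<lambda>y. 0 < Fb y \<and> Fb y \<le> G y \<and> G y \<le> (1+e) * Fb y \<and>
     (\<forall>c. a \<le> c 0 \<longrightarrow> (\<forall>i\<in>{1..<n}. 0 \<le> c i \<and> c i \<le> d) \<longrightarrow>
       (1 - e) * Fb y \<le> measure M {w\<in>space M. c 0 * y < (\<Sum>i<n. c i * ordstat X n (n-i) w)} \<and>
       measure M {w\<in>space M. c 0 * y < (\<Sum>i<n. c i * ordstat X n (n-i) w)} \<le> (1 + e) * Fb y)) (x / c 0)"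
        and c: "c 0 \<in> {a..b} \<and> (\<forall>i\<in>{1..n-1}. c i \<in> {0..d})"
      have ca: "a \<le> c 0" "c 0 \<le> b" using c by auto
      have cp: "0 < c 0" using ca apos by linarith
      have ci: "\<forall>i\<in>{1..<n}. 0 \<le> c i \<and> c i \<le> d"
      proof
        fix i assume "i \<in> {1..<n}"
        then have "i \<in> {1..n-1}" by auto
        then show "0 \<le> c i \<and> c i \<le> d" using c by auto
      qed
      define y where "y = x / c 0"
      have xy: "x = c 0 * y" using cp by (simp add: y_def)
      have Hy: "0 < Fb y" "Fb y \<le> G y" "G y \<le> (1+e) * Fb y"
        "(1 - e) * Fb y \<le> measure M {w\<in>space M. c 0 * y < (\<Sum>i<n. c i * ordstat X n (n-i) w)}"
        "measure M {w\<in>space M. c 0 * y < (\<Sum>i<n. c i * ordstat X n (n-i) w)} \<le> (1 + e) * Fb y"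
        using mp[OF mp[OF spec[OF H, of c] ca(1)] ca(2)] ca ci unfolding y_def[symmetric] by auto
      have P2eq: "measure M {w \<in> space M. c 0 * ordstat X n n w > x} = Fb y"
      proof -
        have "{w \<in> space M. c 0 * ordstat X n n w > x} = {w\<in>space M. y < ordstat X n n w}"
          using cp by (auto simp: xy)
        then show ?thesis by (simp add: Fb_def)
      qed
      have P3eq: "(\<Sum>i=1..n. measure M {w \<in> space M. c 0 * X i w > x}) = G y"
      proof -
        have "\<And>i. {w \<in> space M. c 0 * X i w > x} = {w\<in>space M. y < X i w}"
          using cp by (auto simp: xy)
        then show ?thesis by (simp add: G_def)
      qed
      have P1eq: "{w \<in> space M. (\<Sum>i<n. c i * ordstat X n (n - i) w) > x} = {w\<in>space M. c 0 * y < (\<Sum>i<n. c i * ordstat X n (n-i) w)}"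
        by (simp add: xy)
      have A: "\<bar>measure M {w\<in>space M. c 0 * y < (\<Sum>i<n. c i * ordstat X n (n-i) w)} / Fb y - 1\<bar> < 4*e"
        "\<bar>Fb y / G y - 1\<bar> < 4*e"
        "\<bar>measure M {w\<in>space M. c 0 * y < (\<Sum>i<n. c i * ordstat X n (n-i) w)} / G y - 1\<bar> < 4*e"
        using arith3[OF Hy(1) e Hy(4) Hy(5) Hy(2) Hy(3)] by auto
      have "4 * e = \<epsilon>" by (simp add: e_def)
      then show "\<bar>measure M {w \<in> space M. (\<Sum>i<n. c i * ordstat X n (n - i) w) > x} / measure M {w \<in> space M. c 0 * ordstat X n n w > x} - 1\<bar> < \<epsilon> \<and>
      \<bar>measure M {w \<in> space M. c 0 * ordstat X n n w > x} / (\<Sum>i=1..n. measure M {w \<in> space M. c 0 * X i w > x}) - 1\<bar> < \<epsilon> \<and>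
      \<bar>measure M {w \<in> space M. (\<Sum>i<n. c i * ordstat X n (n - i) w) > x} / (\<Sum>i=1..n. measure M {w \<in> space M. c 0 * X i w > x}) - 1\<bar> < \<epsilon>"
        using A unfolding P1eq P2eq P3eq by simp
    qed
  qed
  show ?thesis unfolding Let_def
  proof (intro conjI allI impI)
    fix \<epsilon> :: real assume "0 < \<epsilon>"
    from key[OF this] show "\<forall>\<^sub>F x in at_top. \<forall>c\<in>{c. c 0 \<in> {a..b} \<and> (\<forall>i\<in>{1..n - 1}. c i \<in> {0..d})}.
        \<bar>measure M {w \<in> space M. x < (\<Sum>i<n. c i * ordstat X n (n - i) w)} / measure M {w \<in> space M. x < c 0 * ordstat X n n w} - 1\<bar> < \<epsilon>"
      by (rule eventually_mono) auto
  next
    fix \<epsilon> :: real assume "0 < \<epsilon>"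
    from key[OF this] show "\<forall>\<^sub>F x in at_top. \<forall>c\<in>{c. c 0 \<in> {a..b} \<and> (\<forall>i\<in>{1..n - 1}. c i \<in> {0..d})}.
        \<bar>measure M {w \<in> space M. x < c 0 * ordstat X n n w} / (\<Sum>i = 1..n. measure M {w \<in> space M. x < c 0 * X i w}) - 1\<bar> < \<epsilon>"
      by (rule eventually_mono) auto
  next
    fix \<epsilon> :: real assume "0 < \<epsilon>"
    from key[OF this] show "\<forall>\<^sub>F x in at_top. \<forall>c\<in>{c. c 0 \<in> {a..b} \<and> (\<forall>i\<in>{1..n - 1}. c i \<in> {0..d})}.
        \<bar>measure M {w \<in> space M. x < (\<Sum>i<n. c i * ordstat X n (n - i) w)} / (\<Sum>i = 1..n. measure M {w \<in> space M. x < c 0 * X i w}) - 1\<bar> < \<epsilon>"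
      by (rule eventually_mono) auto
  qed
qed

end


lemma ereal_pos_below: "0 < (L::ereal) \<Longrightarrow> \<exists>c>0. ereal c < L"
proof -
  assume "0 < L"
  then obtain z where "0 < ereal z" "ereal z < L" using ereal_dense2 by blast
  then show ?thesis by (intro exI[of _ z]) auto
qed

lemma ereal_fin_above: "(L::ereal) < \<infinity> \<Longrightarrow> \<exists>C>0. L < ereal C"
proof -
  assume "L < \<infinity>"
  then obtain z where "L < ereal z" using ereal_dense2 by blast
  moreover have "ereal z \<le> ereal (max z 1)" by simp
  ultimately have "L < ereal (max z 1)" by (rule less_le_trans)
  then show ?thesis by (intro exI[of _ "max z 1"]) auto
qed

lemma limsup_bound:
  assumes "Limsup at_top (\<lambda>x. ereal (f x)) < \<infinity>"
  shows "\<exists>C>0. \<forall>\<^sub>F x in at_top. f x < C"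
proof -
  obtain C where C: "C > 0" "Limsup at_top (\<lambda>x. ereal (f x)) < ereal C" using ereal_fin_above[OF assms] by blast
  have "\<forall>\<^sub>F x in at_top. ereal (f x) < ereal C" using C(2) by (rule Limsup_lessD)
  then have "\<forall>\<^sub>F x in at_top. f x < C" by simp
  with C show ?thesis by blast
qed

lemma liminf_bound:
  assumes "0 < Liminf at_top (\<lambda>x. ereal (f x))"
  shows "\<exists>c>0. \<forall>\<^sub>F x in at_top. c < f x"
proof -
  obtain c where c: "c > 0" "ereal c < Liminf at_top (\<lambda>x. ereal (f x))" using ereal_pos_below[OF assms] by blast
  have "\<forall>\<^sub>F x in at_top. ereal c < ereal (f x)" using c(2) by (rule less_LiminfD)
  then have "\<forall>\<^sub>F x in at_top. c < f x" by simp
  with c show ?thesis by blast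
qed

lemma filterlim_scale: "0 < (\<delta>::real) \<Longrightarrow> filterlim (\<lambda>y. \<delta> * y) at_top at_top"
  unfolding filterlim_at_top
proof
  fix Z assume d: "0 < \<delta>"
  have "\<forall>\<^sub>F y in at_top. Z / \<delta> \<le> y" by (rule eventually_ge_at_top)
  then show "\<forall>\<^sub>F y in at_top. Z \<le> \<delta> * y"
    by (rule eventually_mono) (use d in \<open>simp add: pos_divide_le_eq mult.commute\<close>)
qed

locale base = prob_space M for M :: "'a measure" +
  fixes X :: "nat \<Rightarrow> 'a \<Rightarrow> real" and n :: nat
  assumes n2: "2 \<le> n"
    and rv: "\<And>i. i \<in> {1..n} \<Longrightarrow> X i \<in> borel_measurable M"
begin

definition "Tb y = measure M {w\<in>space M. y < ordstat X n n w}"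

lemma n1: "1 \<le> n" using n2 by simp

lemma Mm: "(\<lambda>w. ordstat X n n w) \<in> borel_measurable M"
proof (rule ordstat_meas)
  show "\<And>i. i \<in> {1..n} \<Longrightarrow> X i \<in> borel_measurable M" by (rule rv)
qed (use n1 in auto)

lemma Mm2: "{w\<in>space M. t < ordstat X n n w} \<in> sets M"
  using meas_less[OF meas_const Mm] by blast

lemma Xm: "i \<in> {1..n} \<Longrightarrow> {w\<in>space M. t < X i w} \<in> sets M"
  using meas_less[OF meas_const rv] by blast

lemma Xm2: "i \<in> {1..n} \<Longrightarrow> {w\<in>space M. t < \<bar>X i w\<bar>} \<in> sets M"
  using meas_less[OF meas_const meas_abs[OF rv]] by blast

lemma A2m: "i \<in> {1..n} \<Longrightarrow> j \<in> {1..n} \<Longrightarrow> {w\<in>space M. s < \<bar>X i w\<bar> \<and> t < X j w} \<in> sets M"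
  by (rule meas_conj) (use Xm Xm2 in auto)

lemma Fcompl: "1 - measure M {w\<in>space M. ordstat X n n w \<le> x} = Tb x"
proof -
  have "{w\<in>space M. ordstat X n n w \<le> x} = space M - {w\<in>space M. x < ordstat X n n w}" by auto
  then show ?thesis using prob_compl[OF Mm2[of x]] by (simp add: Tb_def)
qed

lemma Tb_anti: "x \<le> y \<Longrightarrow> Tb y \<le> Tb x"
  unfolding Tb_def by (rule finite_measure_mono) (auto intro: Mm2)

lemma Tb_nonneg: "0 \<le> Tb x" by (simp add: Tb_def)

lemma Tb_lim0:
  assumes "0 < e" shows "\<exists>K. \<forall>y\<ge>K. Tb y < e"
proof -
  define A where "A k = {w\<in>space M. real k < ordstat X n n w}" for k :: nat
  have "(\<lambda>k. measure M (A k)) \<longlonglongrightarrow> measure M (\<Inter>(range A))"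
  proof (rule finite_Lim_measure_decseq)
    show "range A \<subseteq> sets M" using Mm2 by (auto simp: A_def)
    show "antimono_on UNIV A" unfolding monotone_on_def A_def by auto
  qed
  moreover have "\<Inter>(range A) = {}"
  proof -
    have "w \<notin> A (nat \<lceil>ordstat X n n w\<rceil>)" for w
      unfolding A_def by (simp; linarith)
    then show ?thesis by blast
  qed
  ultimately have "(\<lambda>k. Tb (real k)) \<longlonglongrightarrow> 0" by (simp add: A_def Tb_def)
  then have "\<forall>\<^sub>F k in sequentially. Tb (real k) < e" using assms by (rule order_tendstoD(2))
  then obtain k where k: "Tb (real k) < e" unfolding eventually_sequentially by blast
  show ?thesis
  proof (intro exI allI impI)
    fix y assume "real k \<le> y"
    then have "Tb y \<le> Tb (real k)" by (rule Tb_anti)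
    with k show "Tb y < e" by linarith
  qed
qed

lemma transfer:
  assumes star: "((\<lambda>x. measure M {w \<in> space M. \<bar>X i w\<bar> > t * h x \<and> X j w > x} / Tb x) \<longlongrightarrow> 0) at_top"
    and ij: "i \<in> {1..n}" "j \<in> {1..n}"
    and z: "filterlim z at_top at_top"
    and pos: "\<forall>\<^sub>F y in at_top. 0 < Tb y"
    and K: "\<forall>\<^sub>F y in at_top. Tb (z y) \<le> K * Tb y"
    and sub: "\<forall>\<^sub>F y in at_top. {w\<in>space M. P y w} \<subseteq> {w\<in>space M. t * h (z y) < \<bar>X i w\<bar> \<and> z y < X j w}"
  shows "((\<lambda>y. measure M {w\<in>space M. P y w} / Tb y) \<longlongrightarrow> 0) at_top"
proof (rule tendsto_sandwich)
  show "((\<lambda>y. 0) \<longlongrightarrow> (0::real)) at_top" by simp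
  have lim: "((\<lambda>y. measure M {w \<in> space M. t * h (z y) < \<bar>X i w\<bar> \<and> z y < X j w} / Tb (z y)) \<longlongrightarrow> 0) at_top"
    using filterlim_compose[OF star z] by simp
  show "((\<lambda>y. K * (measure M {w \<in> space M. t * h (z y) < \<bar>X i w\<bar> \<and> z y < X j w} / Tb (z y))) \<longlongrightarrow> 0) at_top"
    using tendsto_mult_right_zero[OF lim] by simp
  show "\<forall>\<^sub>F y in at_top. 0 \<le> measure M {w\<in>space M. P y w} / Tb y" by (simp add: Tb_nonneg)
  have posz: "\<forall>\<^sub>F y in at_top. 0 < Tb (z y)" by (rule eventually_compose_filterlim[OF pos z])
  show "\<forall>\<^sub>F y in at_top. measure M {w\<in>space M. P y w} / Tb y \<le>
        K * (measure M {w \<in> space M. t * h (z y) < \<bar>X i w\<bar> \<and> z y < X j w} / Tb (z y))"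
    using pos posz K sub
  proof eventually_elim
    case (elim y)
    define m where "m = measure M {w \<in> space M. t * h (z y) < \<bar>X i w\<bar> \<and> z y < X j w}"
    have m0: "0 \<le> m" by (simp add: m_def)
    have "measure M {w\<in>space M. P y w} \<le> m"
      unfolding m_def by (rule finite_measure_mono[OF elim(4)]) (rule A2m[OF ij])
    then have "measure M {w\<in>space M. P y w} / Tb y \<le> m / Tb y" using elim(1) by (intro divide_right_mono) auto
    also have "m / Tb y = (m / Tb (z y)) * (Tb (z y) / Tb y)" using elim(1,2) by simp
    also have "\<dots> \<le> (m / Tb (z y)) * K"
    proof (rule mult_left_mono)
      show "Tb (z y) / Tb y \<le> K" using elim(1,3) by (simp add: divide_le_eq)
      show "0 \<le> m / Tb (z y)" using m0 elim(2) by simp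
    qed
    finally show ?case by (simp add: m_def mult.commute)
  qed
qed

end


context base begin

definition "starT h \<longleftrightarrow> (\<forall>i\<in>{1..n}. \<forall>j\<in>{1..n}. i \<noteq> j \<longrightarrow> (\<forall>t>0.
              ((\<lambda>x. measure M {w \<in> space M. \<bar>X i w\<bar> > t * h x \<and> X j w > x} / Tb x) \<longlongrightarrow> 0) at_top))"

definition "starstarT h \<longleftrightarrow> (\<exists>L>0. \<forall>i\<in>{1..n}. \<forall>j\<in>{1..n}. i < j \<longrightarrow>
              ((\<lambda>x. measure M {w \<in> space M. X i w > L * h x \<and> X j w > L * h x} / Tb x) \<longlongrightarrow> 0) at_top)"

definition "hyps h \<longleftrightarrow>
    (\<forall>\<^sub>F y in at_top. 0 < Tb y) \<and>
    (\<forall>\<epsilon>>0. \<exists>\<eta>>0. \<forall>\<^sub>F y in at_top. Tb (y - \<eta> * h y) \<le> (1 + \<epsilon>) * Tb y \<and> (1 - \<epsilon>) * Tb y \<le> Tb (y + \<eta> * h y)) \<and>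
    starT h \<and>
    (\<forall>\<^sub>F y in at_top. 0 < h y) \<and>
    (\<exists>t>0. \<forall>\<^sub>F y in at_top. t * h y \<le> y) \<and>
    (\<forall>\<kappa>>0. \<exists>g. (\<forall>\<^sub>F y in at_top. 0 \<le> g y) \<and>
         (\<forall>i\<in>{1..n}. \<forall>j\<in>{1..n}. i \<noteq> j \<longrightarrow>
            ((\<lambda>y. measure M {w \<in> space M. X i w > g y \<and> X j w > g y} / Tb y) \<longlongrightarrow> 0) at_top \<and>
            (\<forall>\<sigma>>0. ((\<lambda>y. measure M {w \<in> space M. \<bar>X i w\<bar> > \<sigma> * h y \<and> X j w > y - \<kappa> * g y} / Tb y) \<longlongrightarrow> 0) at_top)))"

lemma hyps_core:
  assumes "hyps h" "0 < a" "a \<le> b" "0 \<le> d"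
  shows "core M X n a b d h Tb"
  unfolding core_def core_axioms_def
proof (intro conjI)
  show "prob_space M" by (rule prob_space_axioms)
  show "2 \<le> n" by (rule n2)
  show "\<forall>i. i \<in> {1..n} \<longrightarrow> X i \<in> borel_measurable M" using rv by blast
  show "Tb = (\<lambda>y. measure M {w\<in>space M. y < ordstat X n n w})" by (simp add: Tb_def[abs_def])
qed (use assms in \<open>auto simp: hyps_def starT_def\<close>)

lemma pair_sym:
  assumes "starstarT h"
  shows "\<exists>L>0. \<forall>i\<in>{1..n}. \<forall>j\<in>{1..n}. i \<noteq> j \<longrightarrow>
              ((\<lambda>x. measure M {w \<in> space M. X i w > L * h x \<and> X j w > L * h x} / Tb x) \<longlongrightarrow> 0) at_top"
proof -
  obtain L where L: "L > 0" "\<forall>i\<in>{1..n}. \<forall>j\<in>{1..n}. i < j \<longrightarrow>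
              ((\<lambda>x. measure M {w \<in> space M. X i w > L * h x \<and> X j w > L * h x} / Tb x) \<longlongrightarrow> 0) at_top"
    using assms unfolding starstarT_def by blast
  show ?thesis
  proof (intro exI conjI ballI impI)
    fix i j assume ij: "i \<in> {1..n}" "j \<in> {1..n}" "i \<noteq> j"
    show "((\<lambda>x. measure M {w \<in> space M. X i w > L * h x \<and> X j w > L * h x} / Tb x) \<longlongrightarrow> 0) at_top"
    proof (cases "i < j")
      case True then show ?thesis using L ij by blast
    next
      case False
      then have "j < i" using ij by simp
      then have "((\<lambda>x. measure M {w \<in> space M. X j w > L * h x \<and> X i w > L * h x} / Tb x) \<longlongrightarrow> 0) at_top"
        using L ij by blast
      moreover have "\<And>x. {w \<in> space M. X j w > L * h x \<and> X i w > L * h x} = {w \<in> space M. X i w > L * h x \<and> X j w > L * h x}"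
        by blast
      ultimately show ?thesis by simp
    qed
  qed (use L in simp)
qed

end


context base begin

lemma caseA_GA:
  assumes F_def: "F = (\<lambda>x. measure M {w\<in>space M. ordstat X n n w \<le> x})"
    and UE: "upper_endpoint F = \<infinity>" and G: "GMDA F h"
  shows "((\<lambda>x. Tb (x + s * h x) / Tb x) \<longlongrightarrow> exp (- s)) at_top"
  using G UE unfolding GMDA_def F_def by (simp add: Fcompl)

lemma caseA_pos:
  assumes F_def: "F = (\<lambda>x. measure M {w\<in>space M. ordstat X n n w \<le> x})"
    and UE: "upper_endpoint F = \<infinity>"
  shows "0 < Tb x0"
proof (rule ccontr)
  assume "\<not> 0 < Tb x0"
  then have T0: "Tb x0 = 0" using Tb_nonneg[of x0] by linarith
  have "Sup {ereal x | x. F x < 1} \<le> ereal x0"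
  proof (rule Sup_least)
    fix y assume "y \<in> {ereal x | x. F x < 1}"
    then obtain x where x: "y = ereal x" "F x < 1" by blast
    have "0 < Tb x" using x(2) Fcompl[of x] unfolding F_def by simp
    have "x < x0"
    proof (rule ccontr)
      assume "\<not> x < x0"
      then have "Tb x \<le> Tb x0" by (intro Tb_anti) simp
      with \<open>0 < Tb x\<close> T0 show False by simp
    qed
    then show "y \<le> ereal x0" using x by simp
  qed
  then show False using UE unfolding upper_endpoint_def by simp
qed

lemma caseA_ev_lt:
  assumes lim: "((\<lambda>x. f x) \<longlongrightarrow> (l::real)) at_top" and "l < u"
  shows "\<forall>\<^sub>F x in at_top. f x < u"
  using order_tendstoD(2)[OF lim assms(2)] .

lemma caseA_ev_gt:
  assumes lim: "((\<lambda>x. f x) \<longlongrightarrow> (l::real)) at_top" and "u < l"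
  shows "\<forall>\<^sub>F x in at_top. u < f x"
  using order_tendstoD(1)[OF lim assms(2)] .

lemma caseA_small:
  assumes F_def: "F = (\<lambda>x. measure M {w\<in>space M. ordstat X n n w \<le> x})"
    and UE: "upper_endpoint F = \<infinity>" and G: "GMDA F h" and tau: "0 < \<tau>"
  shows "\<forall>\<^sub>F y in at_top. \<tau> * h y < y"
proof -
  have pos: "\<And>x. 0 < Tb x" using caseA_pos[OF F_def UE] .
  have lim: "((\<lambda>x. Tb (x + (-\<tau>) * h x) / Tb x) \<longlongrightarrow> exp (- (-\<tau>))) at_top"
    by (rule caseA_GA[OF F_def UE G])
  have ev1: "\<forall>\<^sub>F y in at_top. Tb (y + (-\<tau>) * h y) / Tb y < exp \<tau> + 1"
    using caseA_ev_lt[OF lim, of "exp \<tau> + 1"] by simp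
  define e where "e = Tb 0 / (exp \<tau> + 1)"
  have e: "0 < e" unfolding e_def using pos[of 0] by (simp add: add_pos_pos)
  obtain K where K: "\<And>y. y \<ge> K \<Longrightarrow> Tb y < e" using Tb_lim0[OF e] by blast
  have ev2: "\<forall>\<^sub>F y in at_top. K \<le> y" by (rule eventually_ge_at_top)
  show ?thesis using ev1 ev2
  proof eventually_elim
    case (elim y)
    show ?case
    proof (rule ccontr)
      assume "\<not> \<tau> * h y < y"
      then have "y + (-\<tau>) * h y \<le> 0" by simp
      then have "Tb 0 \<le> Tb (y + (-\<tau>) * h y)" by (rule Tb_anti)
      then have "Tb 0 / Tb y \<le> Tb (y + (-\<tau>) * h y) / Tb y" using pos[of y] by (intro divide_right_mono) auto
      also have "\<dots> < exp \<tau> + 1" using elim(1) .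
      finally have "Tb 0 < (exp \<tau> + 1) * Tb y" using pos[of y] by (simp add: divide_less_eq)
      moreover have "Tb y < Tb 0 / (exp \<tau> + 1)" using K[OF elim(2)] unfolding e_def .
      then have "(exp \<tau> + 1) * Tb y < Tb 0" by (simp add: less_divide_eq add_pos_pos mult.commute)
      ultimately show False by linarith
    qed
  qed
qed

lemma exp_ineq: "exp (-3::real) < exp (-1) / 2"
proof -
  have "3 \<le> exp (2::real)" using exp_ge_add_one_self[of 2] by simp
  moreover have "exp (-1::real) = exp 2 * exp (-3)" by (simp add: exp_add[symmetric])
  moreover have "0 < exp (-3::real)" by simp
  ultimately show ?thesis by (simp add: field_simps)
qed

lemma caseA_hyps:
  assumes F_def: "F = (\<lambda>x. measure M {w\<in>space M. ordstat X n n w \<le> x})"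
    and UE: "upper_endpoint F = \<infinity>" and hp: "\<forall>x. 0 < h x" and G: "GMDA F h"
    and st: "starT h" and sst: "starstarT h"
  shows "hyps h"
proof -
  have pos: "\<And>x. 0 < Tb x" using caseA_pos[OF F_def UE] .
  have GA: "\<And>s. ((\<lambda>x. Tb (x + s * h x) / Tb x) \<longlongrightarrow> exp (- s)) at_top"
    by (rule caseA_GA[OF F_def UE G])
  have E1: "\<forall>\<epsilon>>0. \<exists>\<eta>>0. \<forall>\<^sub>F y in at_top. Tb (y - \<eta> * h y) \<le> (1 + \<epsilon>) * Tb y \<and> (1 - \<epsilon>) * Tb y \<le> Tb (y + \<eta> * h y)"
  proof (intro allI impI)
    fix \<epsilon> :: real assume e: "0 < \<epsilon>"
    define \<eta> where "\<eta> = ln (1 + \<epsilon>/2)"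
    have eta: "0 < \<eta>" unfolding \<eta>_def using e by simp
    have ex1: "exp \<eta> = 1 + \<epsilon>/2" unfolding \<eta>_def using e by simp
    have l1: "((\<lambda>x. Tb (x + (-\<eta>) * h x) / Tb x) \<longlongrightarrow> 1 + \<epsilon>/2) at_top" using GA[of "-\<eta>"] ex1 by simp
    have l2: "((\<lambda>x. Tb (x + \<eta> * h x) / Tb x) \<longlongrightarrow> 1 / (1 + \<epsilon>/2)) at_top" using GA[of "\<eta>"] ex1 by (simp add: exp_minus inverse_eq_divide)
    have "1 - \<epsilon> < 1 / (1 + \<epsilon>/2)"
    proof -
      have "(1 - \<epsilon>) * (1 + \<epsilon>/2) < 1" using e by (simp add: algebra_simps power2_eq_square) (smt (verit) mult_pos_pos)
      then show ?thesis using e by (simp add: less_divide_eq)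
    qed
    then have ev2: "\<forall>\<^sub>F y in at_top. 1 - \<epsilon> < Tb (y + \<eta> * h y) / Tb y" by (rule caseA_ev_gt[OF l2])
    have ev1: "\<forall>\<^sub>F y in at_top. Tb (y + (-\<eta>) * h y) / Tb y < 1 + \<epsilon>" by (rule caseA_ev_lt[OF l1]) (use e in simp)
    have "\<forall>\<^sub>F y in at_top. Tb (y - \<eta> * h y) \<le> (1 + \<epsilon>) * Tb y \<and> (1 - \<epsilon>) * Tb y \<le> Tb (y + \<eta> * h y)"
      using ev1 ev2
    proof eventually_elim
      case (elim y)
      have "Tb (y - \<eta> * h y) < (1 + \<epsilon>) * Tb y" using elim(1) pos[of y] by (simp add: divide_less_eq)
      moreover have "(1 - \<epsilon>) * Tb y < Tb (y + \<eta> * h y)" using elim(2) pos[of y] by (simp add: less_divide_eq)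
      ultimately show ?case by simp
    qed
    then show "\<exists>\<eta>>0. \<forall>\<^sub>F y in at_top. Tb (y - \<eta> * h y) \<le> (1 + \<epsilon>) * Tb y \<and> (1 - \<epsilon>) * Tb y \<le> Tb (y + \<eta> * h y)"
      using eta by blast
  qed
  have E4: "\<exists>t>0. \<forall>\<^sub>F y in at_top. t * h y \<le> y"
  proof -
    have "\<forall>\<^sub>F y in at_top. 1 * h y < y" by (rule caseA_small[OF F_def UE G]) simp
    then have "\<forall>\<^sub>F y in at_top. 1 * h y \<le> y" by (rule eventually_mono) simp
    then show ?thesis by (intro exI[of _ 1]) simp
  qed
  have E5: "\<forall>\<kappa>>0. \<exists>g. (\<forall>\<^sub>F y in at_top. 0 \<le> g y) \<and>
         (\<forall>i\<in>{1..n}. \<forall>j\<in>{1..n}. i \<noteq> j \<longrightarrow>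
            ((\<lambda>y. measure M {w \<in> space M. X i w > g y \<and> X j w > g y} / Tb y) \<longlongrightarrow> 0) at_top \<and>
            (\<forall>\<sigma>>0. ((\<lambda>y. measure M {w \<in> space M. \<bar>X i w\<bar> > \<sigma> * h y \<and> X j w > y - \<kappa> * g y} / Tb y) \<longlongrightarrow> 0) at_top))"
  proof (intro allI impI)
    fix \<kappa> :: real assume k: "0 < \<kappa>"
    obtain L where L: "L > 0" "\<forall>i\<in>{1..n}. \<forall>j\<in>{1..n}. i \<noteq> j \<longrightarrow>
              ((\<lambda>x. measure M {w \<in> space M. X i w > L * h x \<and> X j w > L * h x} / Tb x) \<longlongrightarrow> 0) at_top"
      using pair_sym[OF sst] by blast
    define z where "z y = y - \<kappa> * (L * h y)" for y
    define C where "C = \<kappa> * L + 3"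
    have kL: "0 < \<kappa> * L" using k L by simp
    have Cp: "0 < C" using kL by (simp add: C_def)
    have zlim: "filterlim z at_top at_top"
    proof (rule filterlim_at_top_mono[OF filterlim_scale[of "1/2"]])
      have "\<forall>\<^sub>F y in at_top. (2 * (\<kappa> * L)) * h y < y" by (rule caseA_small[OF F_def UE G]) (use kL in simp)
      then show "\<forall>\<^sub>F y in at_top. 1 / 2 * y \<le> z y" by (rule eventually_mono) (simp add: z_def)
    qed simp
    have zeq: "\<And>y. y + (- (\<kappa> * L)) * h y = z y" by (simp add: z_def)
    have Kb: "\<forall>\<^sub>F y in at_top. Tb (z y) \<le> (exp (\<kappa> * L) + 1) * Tb y"
    proof -
      have l: "((\<lambda>x. Tb (z x) / Tb x) \<longlongrightarrow> exp (\<kappa> * L)) at_top" using GA[of "- (\<kappa> * L)"] unfolding zeq by simp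
      have "\<forall>\<^sub>F y in at_top. Tb (z y) / Tb y < exp (\<kappa> * L) + 1" by (rule caseA_ev_lt[OF l]) simp
      then show ?thesis by (rule eventually_mono) (use pos in \<open>simp add: divide_less_eq\<close>)
    qed
    have hz: "\<forall>\<^sub>F y in at_top. h (z y) \<le> C * h y"
    proof -
      have la: "((\<lambda>y. Tb (z y + 1 * h (z y)) / Tb (z y)) \<longlongrightarrow> exp (-1)) at_top"
        using filterlim_compose[OF GA[of 1] zlim] by simp
      have eva: "\<forall>\<^sub>F y in at_top. exp (-1) / 2 < Tb (z y + 1 * h (z y)) / Tb (z y)"
        by (rule caseA_ev_gt[OF la]) simp
      have evb: "\<forall>\<^sub>F y in at_top. Tb (y + 3 * h y) / Tb y < exp (-1) / 2"
        by (rule caseA_ev_lt[OF GA[of 3]]) (use exp_ineq in simp)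
      show ?thesis using eva evb
      proof eventually_elim
        case (elim y)
        show ?case
        proof (rule ccontr)
          assume "\<not> h (z y) \<le> C * h y"
          then have "y + 3 * h y \<le> z y + 1 * h (z y)" by (simp add: z_def C_def algebra_simps)
          then have t1: "Tb (z y + 1 * h (z y)) \<le> Tb (y + 3 * h y)" by (rule Tb_anti)
          have "0 \<le> (\<kappa> * L) * h y" using kL hp by (simp add: less_imp_le)
          then have "z y \<le> y" by (simp add: z_def mult.assoc)
          then have t2: "Tb y \<le> Tb (z y)" by (rule Tb_anti)
          have "Tb (z y + 1 * h (z y)) / Tb (z y) \<le> Tb (y + 3 * h y) / Tb (z y)"
            using t1 pos[of "z y"] by (intro divide_right_mono) auto
          also have "\<dots> \<le> Tb (y + 3 * h y) / Tb y"
            using t2 pos[of y] Tb_nonneg by (intro divide_left_mono) auto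
          finally show False using elim by linarith
        qed
      qed
    qed
    show "\<exists>g. (\<forall>\<^sub>F y in at_top. 0 \<le> g y) \<and>
         (\<forall>i\<in>{1..n}. \<forall>j\<in>{1..n}. i \<noteq> j \<longrightarrow>
            ((\<lambda>y. measure M {w \<in> space M. X i w > g y \<and> X j w > g y} / Tb y) \<longlongrightarrow> 0) at_top \<and>
            (\<forall>\<sigma>>0. ((\<lambda>y. measure M {w \<in> space M. \<bar>X i w\<bar> > \<sigma> * h y \<and> X j w > y - \<kappa> * g y} / Tb y) \<longlongrightarrow> 0) at_top))"
    proof (intro exI[of _ "\<lambda>y. L * h y"] conjI ballI impI allI)
      show "\<forall>\<^sub>F y in at_top. 0 \<le> L * h y" using L hp by (simp add: less_imp_le)
      fix i j assume ij: "i \<in> {1..n}" "j \<in> {1..n}" "i \<noteq> j"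
      show "((\<lambda>y. measure M {w \<in> space M. X i w > L * h y \<and> X j w > L * h y} / Tb y) \<longlongrightarrow> 0) at_top"
        using L ij by blast
      fix \<sigma> :: real assume s: "0 < \<sigma>"
      have stt: "((\<lambda>x. measure M {w \<in> space M. \<bar>X i w\<bar> > (\<sigma> / C) * h x \<and> X j w > x} / Tb x) \<longlongrightarrow> 0) at_top"
      proof -
        have "\<forall>t>0. ((\<lambda>x. measure M {w \<in> space M. \<bar>X i w\<bar> > t * h x \<and> X j w > x} / Tb x) \<longlongrightarrow> 0) at_top"
          using st ij unfolding starT_def by blast
        moreover have "0 < \<sigma> / C" using s Cp by simp
        ultimately show ?thesis by blast
      qed
      show "((\<lambda>y. measure M {w \<in> space M. \<bar>X i w\<bar> > \<sigma> * h y \<and> X j w > y - \<kappa> * (L * h y)} / Tb y) \<longlongrightarrow> 0) at_top"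
      proof (rule transfer[OF stt ij(1,2) zlim _ Kb])
        show "\<forall>\<^sub>F y in at_top. 0 < Tb y" using pos by simp
        show "\<forall>\<^sub>F y in at_top. {w \<in> space M. \<bar>X i w\<bar> > \<sigma> * h y \<and> X j w > y - \<kappa> * (L * h y)}
           \<subseteq> {w\<in>space M. \<sigma> / C * h (z y) < \<bar>X i w\<bar> \<and> z y < X j w}"
          using hz
        proof eventually_elim
          case (elim y)
          have "\<sigma> / C * h (z y) \<le> \<sigma> / C * (C * h y)" using elim s Cp by (intro mult_left_mono) auto
          also have "\<dots> = \<sigma> * h y" using Cp by simp
          finally show ?case by (auto simp: z_def)
        qed
      qed
    qed
  qed
  show ?thesis unfolding hyps_def
    using pos st hp E1 E4 E5 by auto
qed

end


context base begin

lemma BC_unfold: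
  assumes F_def: "F = (\<lambda>x. measure M {w\<in>space M. ordstat X n n w \<le> x})"
    and LT: "long_tailed F" and HC: "h \<in> H_class F"
  shows "\<forall>\<^sub>F y in at_top. 0 < Tb y"
    and "\<forall>\<^sub>F y in at_top. 0 < h y"
    and "((\<lambda>x. h x / x) \<longlongrightarrow> 0) at_top"
    and "\<And>s. ((\<lambda>x. Tb (x + s * h x) / Tb x) \<longlongrightarrow> 1) at_top"
    and "\<And>s. Limsup at_top (\<lambda>x. ereal (h (x + s * h x) / h x)) < \<infinity>"
proof -
  have "\<forall>x\<ge>0. 0 < Tb x" using LT unfolding long_tailed_def F_def by (simp add: Fcompl)
  then show "\<forall>\<^sub>F y in at_top. 0 < Tb y" unfolding eventually_at_top_linorder by blast
  show "\<forall>\<^sub>F y in at_top. 0 < h y" using HC unfolding H_class_def by simp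
  show "((\<lambda>x. h x / x) \<longlongrightarrow> 0) at_top" using HC unfolding H_class_def by simp
  show "\<And>s. ((\<lambda>x. Tb (x + s * h x) / Tb x) \<longlongrightarrow> 1) at_top" using HC unfolding H_class_def F_def by (simp add: Fcompl)
  show "\<And>s. Limsup at_top (\<lambda>x. ereal (h (x + s * h x) / h x)) < \<infinity>" using HC unfolding H_class_def by simp
qed

lemma small_from_o:
  fixes h :: "real \<Rightarrow> real"
  assumes "((\<lambda>x. h x / x) \<longlongrightarrow> 0) at_top" "0 < \<tau>"
  shows "\<forall>\<^sub>F y in at_top. \<tau> * h y < y"
proof -
  have "\<forall>\<^sub>F y in at_top. h y / y < 1 / \<tau>" using order_tendstoD(2)[OF assms(1)] assms(2) by simp
  moreover have "\<forall>\<^sub>F y in at_top. (0::real) < y" by (rule eventually_gt_at_top)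
  ultimately show ?thesis
  proof eventually_elim
    case (elim y)
    then have "h y < y / \<tau>" by (simp add: divide_less_eq)
    then show ?case using assms(2) by (simp add: less_divide_eq mult.commute)
  qed
qed

lemma BC_common:
  assumes F_def: "F = (\<lambda>x. measure M {w\<in>space M. ordstat X n n w \<le> x})"
    and LT: "long_tailed F" and HC: "h \<in> H_class F"
  shows "\<forall>\<epsilon>>0. \<exists>\<eta>>0. \<forall>\<^sub>F y in at_top. Tb (y - \<eta> * h y) \<le> (1 + \<epsilon>) * Tb y \<and> (1 - \<epsilon>) * Tb y \<le> Tb (y + \<eta> * h y)"
    and "\<exists>t>0. \<forall>\<^sub>F y in at_top. t * h y \<le> y"
proof -
  note U = BC_unfold[OF F_def LT HC]
  show "\<forall>\<epsilon>>0. \<exists>\<eta>>0. \<forall>\<^sub>F y in at_top. Tb (y - \<eta> * h y) \<le> (1 + \<epsilon>) * Tb y \<and> (1 - \<epsilon>) * Tb y \<le> Tb (y + \<eta> * h y)"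
  proof (intro allI impI)
    fix \<epsilon> :: real assume e: "0 < \<epsilon>"
    have ev1: "\<forall>\<^sub>F y in at_top. Tb (y + (-1) * h y) / Tb y < 1 + \<epsilon>" by (rule caseA_ev_lt[OF U(4)]) (use e in simp)
    have ev2: "\<forall>\<^sub>F y in at_top. 1 - \<epsilon> < Tb (y + 1 * h y) / Tb y" by (rule caseA_ev_gt[OF U(4)]) (use e in simp)
    have "\<forall>\<^sub>F y in at_top. Tb (y - 1 * h y) \<le> (1 + \<epsilon>) * Tb y \<and> (1 - \<epsilon>) * Tb y \<le> Tb (y + 1 * h y)"
      using ev1 ev2 U(1)
    proof eventually_elim
      case (elim y)
      have "Tb (y - 1 * h y) < (1 + \<epsilon>) * Tb y" using elim by (simp add: divide_less_eq)
      moreover have "(1 - \<epsilon>) * Tb y < Tb (y + 1 * h y)" using elim by (simp add: less_divide_eq)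
      ultimately show ?case by simp
    qed
    then show "\<exists>\<eta>>0. \<forall>\<^sub>F y in at_top. Tb (y - \<eta> * h y) \<le> (1 + \<epsilon>) * Tb y \<and> (1 - \<epsilon>) * Tb y \<le> Tb (y + \<eta> * h y)"
      by (intro exI[of _ 1]) simp
  qed
  have "\<forall>\<^sub>F y in at_top. 1 * h y < y" by (rule small_from_o[OF U(3)]) simp
  then have "\<forall>\<^sub>F y in at_top. 1 * h y \<le> y" by (rule eventually_mono) simp
  then show "\<exists>t>0. \<forall>\<^sub>F y in at_top. t * h y \<le> y" by (intro exI[of _ 1]) simp
qed

lemma caseB_hyps:
  assumes F_def: "F = (\<lambda>x. measure M {w\<in>space M. ordstat X n n w \<le> x})"
    and LT: "long_tailed F" and HC: "h \<in> H_class F"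
    and st: "starT h" and sst: "starstarT h"
  shows "hyps h"
proof -
  note U = BC_unfold[OF F_def LT HC]
  note BC = BC_common[OF F_def LT HC]
  have E5: "\<forall>\<kappa>>0. \<exists>g. (\<forall>\<^sub>F y in at_top. 0 \<le> g y) \<and>
         (\<forall>i\<in>{1..n}. \<forall>j\<in>{1..n}. i \<noteq> j \<longrightarrow>
            ((\<lambda>y. measure M {w \<in> space M. X i w > g y \<and> X j w > g y} / Tb y) \<longlongrightarrow> 0) at_top \<and>
            (\<forall>\<sigma>>0. ((\<lambda>y. measure M {w \<in> space M. \<bar>X i w\<bar> > \<sigma> * h y \<and> X j w > y - \<kappa> * g y} / Tb y) \<longlongrightarrow> 0) at_top))"
  proof (intro allI impI)
    fix \<kappa> :: real assume k: "0 < \<kappa>"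
    obtain L where L: "L > 0" "\<forall>i\<in>{1..n}. \<forall>j\<in>{1..n}. i \<noteq> j \<longrightarrow>
              ((\<lambda>x. measure M {w \<in> space M. X i w > L * h x \<and> X j w > L * h x} / Tb x) \<longlongrightarrow> 0) at_top"
      using pair_sym[OF sst] by blast
    define z where "z y = y - \<kappa> * (L * h y)" for y
    have kL: "0 < \<kappa> * L" using k L by simp
    have zeq: "\<And>y. y + (- (\<kappa> * L)) * h y = z y" by (simp add: z_def)
    have zlim: "filterlim z at_top at_top"
    proof (rule filterlim_at_top_mono[OF filterlim_scale[of "1/2"]])
      have "\<forall>\<^sub>F y in at_top. (2 * (\<kappa> * L)) * h y < y" by (rule small_from_o[OF U(3)]) (use kL in simp)
      then show "\<forall>\<^sub>F y in at_top. 1 / 2 * y \<le> z y" by (rule eventually_mono) (simp add: z_def)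
    qed simp
    have Kb: "\<forall>\<^sub>F y in at_top. Tb (z y) \<le> 2 * Tb y"
    proof -
      have l: "((\<lambda>x. Tb (z x) / Tb x) \<longlongrightarrow> 1) at_top" using U(4)[of "- (\<kappa> * L)"] unfolding zeq .
      have "\<forall>\<^sub>F y in at_top. Tb (z y) / Tb y < 2" by (rule caseA_ev_lt[OF l]) simp
      then show ?thesis using U(1) by eventually_elim (simp add: divide_less_eq)
    qed
    obtain C where C: "0 < C" "\<forall>\<^sub>F x in at_top. h (z x) / h x < C"
      using limsup_bound[OF U(5)[of "- (\<kappa> * L)"]] unfolding zeq by blast
    have hz: "\<forall>\<^sub>F y in at_top. h (z y) \<le> C * h y"
      using C(2) U(2) by eventually_elim (simp add: divide_less_eq)
    show "\<exists>g. (\<forall>\<^sub>F y in at_top. 0 \<le> g y) \<and>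
         (\<forall>i\<in>{1..n}. \<forall>j\<in>{1..n}. i \<noteq> j \<longrightarrow>
            ((\<lambda>y. measure M {w \<in> space M. X i w > g y \<and> X j w > g y} / Tb y) \<longlongrightarrow> 0) at_top \<and>
            (\<forall>\<sigma>>0. ((\<lambda>y. measure M {w \<in> space M. \<bar>X i w\<bar> > \<sigma> * h y \<and> X j w > y - \<kappa> * g y} / Tb y) \<longlongrightarrow> 0) at_top))"
    proof (intro exI[of _ "\<lambda>y. L * h y"] conjI ballI impI allI)
      show "\<forall>\<^sub>F y in at_top. 0 \<le> L * h y" using U(2) by eventually_elim (use L in simp)
      fix i j assume ij: "i \<in> {1..n}" "j \<in> {1..n}" "i \<noteq> j"
      show "((\<lambda>y. measure M {w \<in> space M. X i w > L * h y \<and> X j w > L * h y} / Tb y) \<longlongrightarrow> 0) at_top"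
        using L ij by blast
      fix \<sigma> :: real assume s: "0 < \<sigma>"
      have stt: "((\<lambda>x. measure M {w \<in> space M. \<bar>X i w\<bar> > (\<sigma> / C) * h x \<and> X j w > x} / Tb x) \<longlongrightarrow> 0) at_top"
      proof -
        have "\<forall>t>0. ((\<lambda>x. measure M {w \<in> space M. \<bar>X i w\<bar> > t * h x \<and> X j w > x} / Tb x) \<longlongrightarrow> 0) at_top"
          using st ij unfolding starT_def by blast
        moreover have "0 < \<sigma> / C" using s C by simp
        ultimately show ?thesis by blast
      qed
      show "((\<lambda>y. measure M {w \<in> space M. \<bar>X i w\<bar> > \<sigma> * h y \<and> X j w > y - \<kappa> * (L * h y)} / Tb y) \<longlongrightarrow> 0) at_top"
      proof (rule transfer[OF stt ij(1,2) zlim U(1) Kb])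
        show "\<forall>\<^sub>F y in at_top. {w \<in> space M. \<bar>X i w\<bar> > \<sigma> * h y \<and> X j w > y - \<kappa> * (L * h y)}
           \<subseteq> {w\<in>space M. \<sigma> / C * h (z y) < \<bar>X i w\<bar> \<and> z y < X j w}"
          using hz
        proof eventually_elim
          case (elim y)
          have "\<sigma> / C * h (z y) \<le> \<sigma> / C * (C * h y)" using elim s C by (intro mult_left_mono) auto
          also have "\<dots> = \<sigma> * h y" using C by simp
          finally show ?case by (auto simp: z_def)
        qed
      qed
    qed
  qed
  show ?thesis unfolding hyps_def
    using U(1) BC st U(2) E5 by auto
qed

end


context base begin

lemma D_bound:
  assumes F_def: "F = (\<lambda>x. measure M {w\<in>space M. ordstat X n n w \<le> x})"
    and CD: "class_D F" and E0: "\<forall>\<^sub>F y in at_top. 0 < Tb y" and d: "0 < \<delta>"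
  shows "\<exists>K. \<forall>\<^sub>F y in at_top. Tb (\<delta> * y) \<le> K * Tb y"
proof -
  have all: "\<forall>y>0. 0 < Liminf at_top (\<lambda>x. ereal (Tb (x * y) / Tb x))"
    using CD unfolding class_D_def dominatedly_varying_def F_def by (simp add: Fcompl)
  have "0 < 1/\<delta>" using d by simp
  from all[rule_format, OF this] have "0 < Liminf at_top (\<lambda>x. ereal (Tb (x * (1/\<delta>)) / Tb x))" .
  from liminf_bound[OF this] obtain c where c: "0 < c" "\<forall>\<^sub>F x in at_top. c < Tb (x * (1/\<delta>)) / Tb x"
    by blast
  have ev: "\<forall>\<^sub>F y in at_top. c < Tb (\<delta> * y * (1/\<delta>)) / Tb (\<delta> * y)"
    by (rule eventually_compose_filterlim[OF c(2) filterlim_scale[OF d]])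
  have ev2: "\<forall>\<^sub>F y in at_top. 0 < Tb (\<delta> * y)"
    by (rule eventually_compose_filterlim[OF E0 filterlim_scale[OF d]])
  have "\<forall>\<^sub>F y in at_top. Tb (\<delta> * y) \<le> (1/c) * Tb y"
    using ev ev2
  proof eventually_elim
    case (elim y)
    have "\<delta> * y * (1/\<delta>) = y" using d by simp
    then have "c < Tb y / Tb (\<delta> * y)" using elim(1) by simp
    then have "c * Tb (\<delta> * y) < Tb y" using elim(2) by (simp add: less_divide_eq)
    then show ?case using c(1) by (simp add: field_simps)
  qed
  then show ?thesis by blast
qed

lemma caseC_hyps:
  assumes F_def: "F = (\<lambda>x. measure M {w\<in>space M. ordstat X n n w \<le> x})"
    and LT: "long_tailed F" and CD: "class_D F" and HC: "h \<in> H_class F"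
    and DV: "dominatedly_varying h" and st: "starT h"
  shows "hyps h"
proof -
  note U = BC_unfold[OF F_def LT HC]
  note BC = BC_common[OF F_def LT HC]
  have stt: "\<And>i j t. i \<in> {1..n} \<Longrightarrow> j \<in> {1..n} \<Longrightarrow> i \<noteq> j \<Longrightarrow> 0 < t \<Longrightarrow>
     ((\<lambda>x. measure M {w \<in> space M. \<bar>X i w\<bar> > t * h x \<and> X j w > x} / Tb x) \<longlongrightarrow> 0) at_top"
    using st unfolding starT_def by blast
  have E5: "\<forall>\<kappa>>0. \<exists>g. (\<forall>\<^sub>F y in at_top. 0 \<le> g y) \<and>
         (\<forall>i\<in>{1..n}. \<forall>j\<in>{1..n}. i \<noteq> j \<longrightarrow>
            ((\<lambda>y. measure M {w \<in> space M. X i w > g y \<and> X j w > g y} / Tb y) \<longlongrightarrow> 0) at_top \<and>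
            (\<forall>\<sigma>>0. ((\<lambda>y. measure M {w \<in> space M. \<bar>X i w\<bar> > \<sigma> * h y \<and> X j w > y - \<kappa> * g y} / Tb y) \<longlongrightarrow> 0) at_top))"
  proof (intro allI impI)
    fix \<kappa> :: real assume k: "0 < \<kappa>"
    define \<delta> where "\<delta> = 1 / (2 * \<kappa>)"
    have d: "0 < \<delta>" using k by (simp add: \<delta>_def)
    have kd: "\<And>y. y - \<kappa> * (\<delta> * y) = y / 2" using k by (simp add: \<delta>_def field_simps)
    obtain K1 where K1: "\<forall>\<^sub>F y in at_top. Tb (\<delta> * y) \<le> K1 * Tb y" using D_bound[OF F_def CD U(1) d] by blast
    obtain K2 where K2': "\<forall>\<^sub>F y in at_top. Tb ((1/2) * y) \<le> K2 * Tb y" using D_bound[OF F_def CD U(1), of "1/2"] by auto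
    have K2: "\<forall>\<^sub>F y in at_top. Tb (y / 2) \<le> K2 * Tb y" using K2' by simp
    have z1: "filterlim (\<lambda>y. \<delta> * y) at_top at_top" by (rule filterlim_scale[OF d])
    have z2: "filterlim (\<lambda>y::real. y / 2) at_top at_top" using filterlim_scale[of "1/2"] by simp
    have hsmall: "\<forall>\<^sub>F y in at_top. 1 * h (\<delta> * y) < \<delta> * y"
      by (rule eventually_compose_filterlim[OF small_from_o[OF U(3)] z1]) simp
    have allh: "\<forall>y>0. Limsup at_top (\<lambda>x. ereal (h (x * y) / h x)) < \<infinity>"
      using DV unfolding dominatedly_varying_def by blast
    have "(0::real) < 1/2" by simp
    from allh[rule_format, OF this] have "Limsup at_top (\<lambda>x. ereal (h (x * (1/2)) / h x)) < \<infinity>" .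
    from limsup_bound[OF this] obtain C where C: "0 < C" "\<forall>\<^sub>F x in at_top. h (x * (1/2)) / h x < C"
      by blast
    have hz: "\<forall>\<^sub>F y in at_top. h (y / 2) \<le> C * h y"
      using C(2) U(2) by eventually_elim (simp add: divide_less_eq)
    show "\<exists>g. (\<forall>\<^sub>F y in at_top. 0 \<le> g y) \<and>
         (\<forall>i\<in>{1..n}. \<forall>j\<in>{1..n}. i \<noteq> j \<longrightarrow>
            ((\<lambda>y. measure M {w \<in> space M. X i w > g y \<and> X j w > g y} / Tb y) \<longlongrightarrow> 0) at_top \<and>
            (\<forall>\<sigma>>0. ((\<lambda>y. measure M {w \<in> space M. \<bar>X i w\<bar> > \<sigma> * h y \<and> X j w > y - \<kappa> * g y} / Tb y) \<longlongrightarrow> 0) at_top))"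
    proof (intro exI[of _ "\<lambda>y. \<delta> * y"] conjI ballI impI allI)
      show "\<forall>\<^sub>F y in at_top. 0 \<le> \<delta> * y" using eventually_ge_at_top[of "0::real"] by eventually_elim (use d in simp)
      fix i j assume ij: "i \<in> {1..n}" "j \<in> {1..n}" "i \<noteq> j"
      show "((\<lambda>y. measure M {w \<in> space M. X i w > \<delta> * y \<and> X j w > \<delta> * y} / Tb y) \<longlongrightarrow> 0) at_top"
      proof (rule transfer[OF stt[OF ij, of 1] ij(1,2) z1 U(1) K1])
        show "\<forall>\<^sub>F y in at_top. {w \<in> space M. X i w > \<delta> * y \<and> X j w > \<delta> * y}
           \<subseteq> {w\<in>space M. 1 * h (\<delta> * y) < \<bar>X i w\<bar> \<and> \<delta> * y < X j w}"
          using hsmall by eventually_elim auto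
      qed simp
      fix \<sigma> :: real assume s: "0 < \<sigma>"
      show "((\<lambda>y. measure M {w \<in> space M. \<bar>X i w\<bar> > \<sigma> * h y \<and> X j w > y - \<kappa> * (\<delta> * y)} / Tb y) \<longlongrightarrow> 0) at_top"
      proof (rule transfer[OF stt[OF ij, of "\<sigma> / C"] ij(1,2) z2 U(1) K2])
        show "0 < \<sigma> / C" using s C by simp
        show "\<forall>\<^sub>F y in at_top. {w \<in> space M. \<bar>X i w\<bar> > \<sigma> * h y \<and> X j w > y - \<kappa> * (\<delta> * y)}
           \<subseteq> {w\<in>space M. \<sigma> / C * h (y / 2) < \<bar>X i w\<bar> \<and> y / 2 < X j w}"
          using hz
        proof eventually_elim
          case (elim y)
          have "\<sigma> / C * h (y / 2) \<le> \<sigma> / C * (C * h y)" using elim s C by (intro mult_left_mono) auto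
          also have "\<dots> = \<sigma> * h y" using C by simp
          finally have hh: "\<sigma> / C * h (y / 2) \<le> \<sigma> * h y" .
          show ?case
          proof (rule subsetI)
            fix w assume "w \<in> {w \<in> space M. \<bar>X i w\<bar> > \<sigma> * h y \<and> X j w > y - \<kappa> * (\<delta> * y)}"
            then have w: "w \<in> space M" "\<sigma> * h y < \<bar>X i w\<bar>" "y - \<kappa> * (\<delta> * y) < X j w" by auto
            have "y / 2 < X j w" using w(3) kd[of y] by linarith
            moreover have "\<sigma> / C * h (y / 2) < \<bar>X i w\<bar>" using hh w(2) by linarith
            ultimately show "w \<in> {w\<in>space M. \<sigma> / C * h (y / 2) < \<bar>X i w\<bar> \<and> y / 2 < X j w}" using w(1) by simp
          qed
        qed
      qed
    qed
  qed
  show ?thesis unfolding hyps_def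
    using U(1) BC st U(2) E5 by auto
qed

end


theorem theorem3p1:
  fixes M :: "'a measure" and X :: "nat \<Rightarrow> 'a \<Rightarrow> real" and n :: nat
    and a b d :: real
  assumes "prob_space M"
    and "n \<ge> 2"
    and rv: "\<And>i. i \<in> {1..n} \<Longrightarrow> X i \<in> borel_measurable M"
    and cases:
      "let F = (\<lambda>x. measure M {w \<in> space M. ordstat X n n w \<le> x});
           Fbar = (\<lambda>x. measure M {w \<in> space M. ordstat X n n w > x});
           star = (\<lambda>h. \<forall>i\<in>{1..n}. \<forall>j\<in>{1..n}. i \<noteq> j \<longrightarrow> (\<forall>t>0.
              ((\<lambda>x. measure M {w \<in> space M. \<bar>X i w\<bar> > t * h x \<and> X j w > x} / Fbar x)
                 \<longlongrightarrow> 0) at_top));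
           starstar = (\<lambda>h. \<exists>L>0. \<forall>i\<in>{1..n}. \<forall>j\<in>{1..n}. i < j \<longrightarrow>
              ((\<lambda>x. measure M {w \<in> space M. X i w > L * h x \<and> X j w > L * h x} / Fbar x)
                 \<longlongrightarrow> 0) at_top)
       in (upper_endpoint F = \<infinity> \<and>
             (\<exists>h. (\<forall>x. h x > 0) \<and> GMDA F h \<and> star h \<and> starstar h))
        \<or> (long_tailed F \<and> (\<exists>h \<in> H_class F. star h \<and> starstar h))
        \<or> (long_tailed F \<and> class_D F \<and>
             (\<exists>h \<in> H_class F. dominatedly_varying h \<and> star h))"
    and "0 < a" and "a \<le> b" and "0 \<le> d"
  shows
    "let C = {c :: nat \<Rightarrow> real. c 0 \<in> {a..b} \<and> (\<forall>i\<in>{1..n-1}. c i \<in> {0..d})};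
         P1 = (\<lambda>c x. measure M {w \<in> space M. (\<Sum>i<n. c i * ordstat X n (n - i) w) > x});
         P2 = (\<lambda>c x. measure M {w \<in> space M. c 0 * ordstat X n n w > x});
         P3 = (\<lambda>c x. \<Sum>i=1..n. measure M {w \<in> space M. c 0 * X i w > x})
     in (\<forall>\<epsilon>>0. \<forall>\<^sub>F x in at_top. \<forall>c\<in>C. \<bar>P1 c x / P2 c x - 1\<bar> < \<epsilon>) \<and>
        (\<forall>\<epsilon>>0. \<forall>\<^sub>F x in at_top. \<forall>c\<in>C. \<bar>P2 c x / P3 c x - 1\<bar> < \<epsilon>) \<and>
        (\<forall>\<epsilon>>0. \<forall>\<^sub>F x in at_top. \<forall>c\<in>C. \<bar>P1 c x / P3 c x - 1\<bar> < \<epsilon>)"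
proof -
  interpret base M X n
    by (rule base.intro[OF assms(1)], unfold_locales) (use assms(2) rv in auto)
  define F where "F = (\<lambda>x. measure M {w\<in>space M. ordstat X n n w \<le> x})"
  have c: "(upper_endpoint F = \<infinity> \<and> (\<exists>h. (\<forall>x. 0 < h x) \<and> GMDA F h \<and> starT h \<and> starstarT h))
        \<or> (long_tailed F \<and> (\<exists>h\<in>H_class F. starT h \<and> starstarT h))
        \<or> (long_tailed F \<and> class_D F \<and> (\<exists>h\<in>H_class F. dominatedly_varying h \<and> starT h))"
    using cases unfolding Let_def starT_def starstarT_def Tb_def F_def by simp
  have "\<exists>h. hyps h"
  proof -
    { assume "upper_endpoint F = \<infinity> \<and> (\<exists>h. (\<forall>x. 0 < h x) \<and> GMDA F h \<and> starT h \<and> starstarT h)"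
      then obtain h where "upper_endpoint F = \<infinity>" "\<forall>x. 0 < h x" "GMDA F h" "starT h" "starstarT h" by blast
      then have ?thesis using caseA_hyps[OF F_def] by blast }
    moreover
    { assume "long_tailed F \<and> (\<exists>h\<in>H_class F. starT h \<and> starstarT h)"
      then obtain h where "long_tailed F" "h \<in> H_class F" "starT h" "starstarT h" by blast
      then have ?thesis using caseB_hyps[OF F_def] by blast }
    moreover
    { assume "long_tailed F \<and> class_D F \<and> (\<exists>h\<in>H_class F. dominatedly_varying h \<and> starT h)"
      then obtain h where "long_tailed F" "class_D F" "h \<in> H_class F" "dominatedly_varying h" "starT h" by blast
      then have ?thesis using caseC_hyps[OF F_def] by blast }
    ultimately show ?thesis using c by blast
  qed
  then obtain h where h: "hyps h" by blast
  interpret core M X n a b d h Tb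
    by (rule hyps_core[OF h]) (use assms in auto)
  show ?thesis by (rule core_result)
qed

end
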